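(* Let $\mathbf u\approx\mathbf v$ be an identity that holds in the variety $\mathbf F\vee\mathbf E$. Then either $\mathbf O\{\mathbf u\approx\mathbf v\}=\mathbf O\{\mathbf u'\approx\mathbf v'\}$ or $\mathbf O\{\mathbf u\approx\mathbf v\}=\mathbf O\{\mathbf u'\approx\mathbf v',\ xyxztx\approx xyxzxtx\}$ for some well-balanced identity $\mathbf u'\approx\mathbf v'$.
   Context: Words are elements of the free monoid over a countably infinite alphabet. Monoid varieties: $\mathbf O$ is defined by $x^2y^2\approx y^2x^2$ and $xzxyxty\approx xzyxty$; $\mathbf E$ is defined by $x^2y^2\approx y^2x^2$, $x^2\approx x^3$, $yx^2\approx xyx$; $\mathbf F$ is defined by $xyx\approx xyx^2$, $x^2y^2\approx y^2x^2$, $xyzxy\approx yxzxy$, $x^2y\approx x^2yx$; $\mathbf F\vee\mathbf E$ is their join. For a set of identities $\Sigma$, $\mathbf O\{\Sigma\}$ denotes the subvariety of $\mathbf O$ defined within $\mathbf O$ by $\Sigma$. A letter is simple in a word if it occurs once there. If the simple letters of $\mathbf w$ are $t_1,\dots,t_m$ in order of occurrence, then $\mathbf w=t_0\mathbf w_0t_1\mathbf w_1\cdots t_m\mathbf w_m$ with $t_0$ the empty word and $\mathbf w_i$ possibly empty words without simple letters of $\mathbf w$; this is the decomposition of $\mathbf w$, the $\mathbf w_i$ are its blocks. An identity $\mathbf u\approx\mathbf v$ is well-balanced if the decompositions have the forms $\mathbf u=t_0\mathbf u_0t_1\mathbf u_1\cdots t_m\mathbf u_m$ and $\mathbf v=t_0\mathbf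 v_0t_1\mathbf v_1\cdots t_m\mathbf v_m$ with the same dividers $t_1,\dots,t_m$ in the same order, and for every letter $x$ and every $i$, the number of occurrences of $x$ in $\mathbf u_i$ equals that in $\mathbf v_i$. *)

theory Defs
  imports "HOL-Library.Multiset"
begin

text \<open>Words over the countably infinite alphabet nat; the identity u = v is the pair (u, v).\<close>
type_synonym word = "nat list"
type_synonym identity = "word \<times> word"

definition subst :: "(nat \<Rightarrow> word) \<Rightarrow> word \<Rightarrow> word" where
  "subst \<sigma> w = concat (map \<sigma> w)"

text \<open>By Birkhoff's completeness theorem, (u,v) is in eq_theory S iff u = v holds in
  the monoid variety defined by S.\<close>
inductive_set eq_theory :: "identity set \<Rightarrow> identity set" for S where
  ax: "p \<in> S \<Longrightarrow> p \<in> eq_theory S"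
| refl: "(w, w) \<in> eq_theory S"
| sym: "(u, v) \<in> eq_theory S \<Longrightarrow> (v, u) \<in> eq_theory S"
| trans: "(u, v) \<in> eq_theory S \<Longrightarrow> (v, w) \<in> eq_theory S \<Longrightarrow> (u, w) \<in> eq_theory S"
| subst: "(u, v) \<in> eq_theory S \<Longrightarrow> (subst \<sigma> u, subst \<sigma> v) \<in> eq_theory S"
| mult: "(u, v) \<in> eq_theory S \<Longrightarrow> (a @ u @ b, a @ v @ b) \<in> eq_theory S"

text \<open>Letters: x = 0, y = 1, z = 2, t = 3.\<close>
definition O_ids :: "identity set" where
  "O_ids = {([0,0,1,1], [1,1,0,0]), ([0,2,0,1,0,3,1], [0,2,1,0,3,1])}"

definition E_ids :: "identity set" where
  "E_ids = {([0,0,1,1], [1,1,0,0]), ([0,0], [0,0,0]), ([1,0,0], [0,1,0])}"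

definition F_ids :: "identity set" where
  "F_ids = {([0,1,0], [0,1,0,0]), ([0,0,1,1], [1,1,0,0]),
            ([0,1,2,0,1], [1,0,2,0,1]), ([0,0,1], [0,0,1,0])}"

text \<open>An identity holds in the join F \<or> E iff it holds in both F and E.\<close>
definition holds_in_FE :: "identity \<Rightarrow> bool" where
  "holds_in_FE p \<longleftrightarrow> p \<in> eq_theory F_ids \<and> p \<in> eq_theory E_ids"

definition extra_id :: identity where
  "extra_id = ([0,1,0,2,3,0], [0,1,0,2,0,3,0])"

text \<open>O{Sigma} is represented by its equational theory eq_theory (O_ids \<union> Sigma); two
  subvarieties are equal iff their equational theories coincide.\<close>
definition O_sub :: "identity set \<Rightarrow> identity set" where
  "O_sub \<Sigma> = eq_theory (O_ids \<union> \<Sigma>)"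

fun split_at_pred :: "('a \<Rightarrow> bool) \<Rightarrow> 'a list \<Rightarrow> 'a list list" where
  "split_at_pred P [] = [[]]"
| "split_at_pred P (x # xs) =
     (let r = split_at_pred P xs in if P x then [] # r else (x # hd r) # tl r)"

definition simple_letters :: "word \<Rightarrow> nat list" where
  "simple_letters w = filter (\<lambda>x. count_list w x = 1) w"

definition blocks :: "word \<Rightarrow> word list" where
  "blocks w = split_at_pred (\<lambda>x. count_list w x = 1) w"

definition well_balanced :: "word \<Rightarrow> word \<Rightarrow> bool" where
  "well_balanced u v \<longleftrightarrow> simple_letters u = simple_letters v \<and>
     list_all2 (\<lambda>a b. mset a = mset b) (blocks u) (blocks v)"

end

theory Submission
  imports Defs
begin


lemma subst_Nil[simp]: "subst s [] = []" by (simp add: subst_def)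
lemma subst_Cons[simp]: "subst s (x # w) = s x @ subst s w" by (simp add: subst_def)
lemma subst_append[simp]: "subst s (u @ w) = subst s u @ subst s w" by (simp add: subst_def)
lemma subst_subst: "subst s (subst t w) = subst (\<lambda>x. subst s (t x)) w"
  by (induction w) auto
lemma subst_id[simp]: "subst (\<lambda>x. [x]) w = w"
  by (induction w) auto

lemma eq_theory_closed:
  assumes "(u, v) \<in> eq_theory S" and "S \<subseteq> eq_theory T"
  shows "(u, v) \<in> eq_theory T"
  using assms(1)
proof (induction rule: eq_theory.induct)
  case (ax p) then show ?case using assms(2) by auto
next
  case (refl w) show ?case by (rule eq_theory.refl)
next
  case (sym u v) from sym.IH show ?case by (rule eq_theory.sym)
next
  case (trans u v w) from trans.IH show ?case by (rule eq_theory.trans)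
next
  case (subst u v \<sigma>) from subst.IH show ?case by (rule eq_theory.subst)
next
  case (mult u v a b) from mult.IH show ?case by (rule eq_theory.mult)
qed

lemma eq_theory_mono: "S \<subseteq> T \<Longrightarrow> p \<in> eq_theory S \<Longrightarrow> p \<in> eq_theory T"
proof -
  assume a: "S \<subseteq> T" "p \<in> eq_theory S"
  have "S \<subseteq> eq_theory T" using a(1) by (auto intro: eq_theory.ax)
  then show ?thesis using eq_theory_closed[of "fst p" "snd p" S T] a(2) by (cases p) auto
qed

lemma eq_theory_inst:
  assumes "(p, q) \<in> S"
  shows "(a @ subst s p @ b, a @ subst s q @ b) \<in> eq_theory S"
  by (rule eq_theory.mult, rule eq_theory.subst, rule eq_theory.ax, rule assms)

lemma eq_trans': "(u, v) \<in> eq_theory S \<Longrightarrow> (v, w) \<in> eq_theory S \<Longrightarrow> (u, w) \<in> eq_theory S"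
  by (rule eq_theory.trans)

lemma eq_theory_invariant0:
  fixes phi :: "word \<Rightarrow> 'b"
  assumes "pr \<in> eq_theory S"
    and ax: "\<And>p q s. (p, q) \<in> S \<Longrightarrow> phi (subst s p) = phi (subst s q)"
    and cong: "\<And>u v a b. phi u = phi v \<Longrightarrow> phi (a @ u @ b) = phi (a @ v @ b)"
  shows "\<forall>s. phi (subst s (fst pr)) = phi (subst s (snd pr))"
  using assms(1)
proof (induction rule: eq_theory.induct)
  case (ax p) then show ?case using assms(2)[of "fst p" "snd p"] by (cases p) simp
next
  case (refl w) then show ?case by simp
next
  case (sym u v) then show ?case by (metis fst_conv snd_conv)
next
  case (trans u v w) then show ?case by (metis fst_conv snd_conv)
next
  case (subst u v \<sigma>) then show ?case by (simp add: subst_subst)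
next
  case (mult u v a b)
  show ?case
  proof
    fix s
    have "phi (subst s u) = phi (subst s v)" using mult.IH by simp
    then have "phi (subst s a @ subst s u @ subst s b) = phi (subst s a @ subst s v @ subst s b)"
      by (rule cong)
    then show "phi (subst s (fst (a @ u @ b, a @ v @ b))) = phi (subst s (snd (a @ u @ b, a @ v @ b)))"
      by simp
  qed
qed

lemma eq_theory_invariant:
  fixes phi :: "word \<Rightarrow> 'b"
  assumes "(u, v) \<in> eq_theory S"
    and "\<And>p q s. (p, q) \<in> S \<Longrightarrow> phi (subst s p) = phi (subst s q)"
    and "\<And>u v a b. phi u = phi v \<Longrightarrow> phi (a @ u @ b) = phi (a @ v @ b)"
  shows "phi (subst s u) = phi (subst s v)"
  using eq_theory_invariant0[OF assms] by simp

lemma eq_theory_invariant_id: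
  fixes phi :: "word \<Rightarrow> 'b"
  assumes "(u, v) \<in> eq_theory S"
    and "\<And>p q s. (p, q) \<in> S \<Longrightarrow> phi (subst s p) = phi (subst s q)"
    and "\<And>u v a b. phi u = phi v \<Longrightarrow> phi (a @ u @ b) = phi (a @ v @ b)"
  shows "phi u = phi v"
  using eq_theory_invariant[OF assms, of "\<lambda>x. [x]"] by simp


definition after :: "word \<Rightarrow> nat \<Rightarrow> nat \<Rightarrow> bool" where
  "after w a b \<longleftrightarrow> (\<exists>p q. w = p @ a # q \<and> b \<in> set q)"

lemma after_Nil[simp]: "\<not> after [] a b" by (simp add: after_def)

lemma after_Cons: "after (c # w) a b \<longleftrightarrow> (c = a \<and> b \<in> set w) \<or> after w a b"
proof
  assume "after (c # w) a b"
  then obtain p q where h: "c # w = p @ a # q" "b \<in> set q" by (auto simp: after_def)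
  show "(c = a \<and> b \<in> set w) \<or> after w a b"
  proof (cases p)
    case Nil then show ?thesis using h by auto
  next
    case (Cons c' p') then show ?thesis using h by (auto simp: after_def)
  qed
next
  assume "(c = a \<and> b \<in> set w) \<or> after w a b"
  then show "after (c # w) a b"
  proof
    assume "c = a \<and> b \<in> set w" then show ?thesis unfolding after_def by (rule_tac x="[]" in exI) auto
  next
    assume "after w a b"
    then obtain p q where "w = p @ a # q" "b \<in> set q" by (auto simp: after_def)
    then show ?thesis unfolding after_def by (rule_tac x="c # p" in exI) auto
  qed
qed

lemma after_append: "after (p @ q) a b \<longleftrightarrow> after p a b \<or> (a \<in> set p \<and> b \<in> set q) \<or> after q a b"
  by (induction p) (auto simp: after_Cons)

lemma after_in: "after w a b \<Longrightarrow> a \<in> set w"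
  by (auto simp: after_def)

definition phiE :: "word \<Rightarrow> (nat \<Rightarrow> nat) \<times> (nat \<Rightarrow> nat \<Rightarrow> bool)" where
  "phiE w = ((\<lambda>z. min 2 (count_list w z)), (\<lambda>a b. count_list w a = 1 \<and> after w a b))"

definition phiF :: "word \<Rightarrow> (nat \<Rightarrow> nat) \<times> (nat \<Rightarrow> nat \<Rightarrow> nat)" where
  "phiF w = ((\<lambda>z. min 2 (count_list w z)),
     (\<lambda>t x. if count_list w t = 1 then min 2 (count_list (takeWhile (\<lambda>c. c \<noteq> t) w) x) else 0))"

lemma min2_add: "min 2 (x::nat) = min 2 y \<Longrightarrow> min 2 (p + x + q) = min 2 (p + y + q)"
  by linarith

lemma min2_eq1: "min 2 (x::nat) = min 2 y \<Longrightarrow> (p + x + q = 1) = (p + y + q = 1)"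
  by linarith

lemma set_eq_min2: "(\<And>z. min 2 (count_list u z) = min 2 (count_list v z)) \<Longrightarrow> set u = set v"
proof -
  assume h: "\<And>z. min 2 (count_list u z) = min 2 (count_list v z)"
  have "z \<in> set u \<longleftrightarrow> z \<in> set v" for z
    using h[of z] count_list_0_iff[of u z] count_list_0_iff[of v z] by linarith
  then show ?thesis by auto
qed

lemma phiE_cong:
  assumes "phiE u = phiE v" shows "phiE (a @ u @ b) = phiE (a @ v @ b)"
proof -
  have H1: "\<And>z. min 2 (count_list u z) = min 2 (count_list v z)"
    using assms by (auto simp: phiE_def fun_eq_iff)
  have H2: "\<And>c d. (count_list u c = 1 \<and> after u c d) = (count_list v c = 1 \<and> after v c d)"
    using assms by (auto simp: phiE_def fun_eq_iff)
  have S: "set u = set v" using H1 set_eq_min2 by blast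
  have K: "after u c d = after v c d" if "count_list u c \<le> 1" for c d
  proof (cases "count_list u c = 1")
    case True then have "count_list v c = 1" using H1[of c] by linarith
    then show ?thesis using H2[of c d] True by auto
  next
    case False then have "count_list u c = 0" using that by linarith
    then have "c \<notin> set u" by (simp add: count_list_0_iff)
    then show ?thesis using S after_in by metis
  qed
  have C: "min 2 (count_list (a @ u @ b) z) = min 2 (count_list (a @ v @ b) z)" for z
    using min2_add[OF H1[of z], of "count_list a z" "count_list b z"] by simp
  have C1: "(count_list (a @ u @ b) z = 1) = (count_list (a @ v @ b) z = 1)" for z
    using min2_eq1[OF H1[of z], of "count_list a z" "count_list b z"] by (simp add: add.assoc)
  have R: "(count_list (a @ u @ b) c = 1 \<and> after (a @ u @ b) c d) =
           (count_list (a @ v @ b) c = 1 \<and> after (a @ v @ b) c d)" for c d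
  proof (cases "count_list (a @ u @ b) c = 1")
    case True
    then have "count_list u c \<le> 1" by simp
    then have "after u c d = after v c d" by (rule K)
    then show ?thesis using C1[of c] S by (simp add: after_append)
  next
    case False then show ?thesis using C1[of c] by simp
  qed
  show ?thesis unfolding phiE_def using C R by (simp add: fun_eq_iff)
qed

lemma tw_not_in: "t \<notin> set w \<Longrightarrow> takeWhile (\<lambda>c. c \<noteq> t) w = w"
  by (induction w) auto

lemma tw_app_notin: "t \<notin> set p \<Longrightarrow> takeWhile (\<lambda>c. c \<noteq> t) (p @ q) = p @ takeWhile (\<lambda>c. c \<noteq> t) q"
  by (induction p) auto

lemma tw_app_in: "t \<in> set p \<Longrightarrow> takeWhile (\<lambda>c. c \<noteq> t) (p @ q) = takeWhile (\<lambda>c. c \<noteq> t) p"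
  by (induction p) auto

lemma phiF_cong:
  assumes "phiF u = phiF v" shows "phiF (a @ u @ b) = phiF (a @ v @ b)"
proof -
  have H1: "\<And>z. min 2 (count_list u z) = min 2 (count_list v z)"
    using assms by (auto simp: phiF_def fun_eq_iff)
  have H2: "\<And>t x. (if count_list u t = 1 then min 2 (count_list (takeWhile (\<lambda>c. c \<noteq> t) u) x) else 0)
     = (if count_list v t = 1 then min 2 (count_list (takeWhile (\<lambda>c. c \<noteq> t) v) x) else 0)"
    using assms by (auto simp: phiF_def fun_eq_iff)
  have S: "set u = set v" using H1 set_eq_min2 by blast
  have C: "min 2 (count_list (a @ u @ b) z) = min 2 (count_list (a @ v @ b) z)" for z
    using min2_add[OF H1[of z], of "count_list a z" "count_list b z"] by simp
  have C1: "(count_list (a @ u @ b) z = 1) = (count_list (a @ v @ b) z = 1)" for z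
    using min2_eq1[OF H1[of z], of "count_list a z" "count_list b z"] by (simp add: add.assoc)
  have R: "min 2 (count_list (takeWhile (\<lambda>c. c \<noteq> t) (a @ u @ b)) x) =
           min 2 (count_list (takeWhile (\<lambda>c. c \<noteq> t) (a @ v @ b)) x)"
    if T: "count_list (a @ u @ b) t = 1" for t x
  proof -
    consider "t \<in> set a" | "t \<notin> set a" "t \<in> set u" | "t \<notin> set a" "t \<notin> set u" by blast
    then show ?thesis
    proof cases
      case 1 then show ?thesis by (simp add: tw_app_in)
    next
      case 2
      have a0: "count_list a t = 0" using 2 by (simp add: count_list_0_iff)
      have u0: "count_list u t \<noteq> 0" using 2 by (simp add: count_list_0_iff)
      have cu: "count_list u t = 1" using T a0 u0 by auto
      then have cv: "count_list v t = 1" using H1[of t] by linarith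
      have tv: "t \<in> set v" using 2 S by simp
      have "min 2 (count_list (takeWhile (\<lambda>c. c \<noteq> t) u) x) = min 2 (count_list (takeWhile (\<lambda>c. c \<noteq> t) v) x)"
        using H2[of t x] cu cv by simp
      then show ?thesis using 2 tv
        by (simp add: tw_app_notin tw_app_in)
    next
      case 3
      then have tv: "t \<notin> set v" using S by simp
      have "min 2 (count_list u x) = min 2 (count_list v x)" by (rule H1)
      then show ?thesis using 3 tv
        by (simp add: tw_app_notin)
    qed
  qed
  show ?thesis unfolding phiF_def using C C1 R by (simp add: fun_eq_iff)
qed


lemma in_set_cnt: "x \<in> set w \<longleftrightarrow> count_list w x \<noteq> 0"
  by (simp add: count_list_0_iff)

lemma phiE_ax: "(p, q) \<in> E_ids \<Longrightarrow> phiE (subst s p) = phiE (subst s q)"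
proof -
  assume "(p, q) \<in> E_ids"
  then consider "p = [0,0,1,1]" "q = [1,1,0,0]" | "p = [0,0]" "q = [0,0,0]" | "p = [1,0,0]" "q = [0,1,0]"
    unfolding E_ids_def by auto
  then show ?thesis
  proof cases
    case 1
    show ?thesis using 1 unfolding phiE_def apply (auto simp: fun_eq_iff) apply arith+ done
  next
    case 2
    show ?thesis using 2 unfolding phiE_def apply (auto simp: fun_eq_iff) apply arith+ done
  next
    case 3
    have "(count_list (s 1 @ s 0 @ s 0) c = 1 \<and> after (s 1 @ s 0 @ s 0) c d) =
          (count_list (s 0 @ s 1 @ s 0) c = 1 \<and> after (s 0 @ s 1 @ s 0) c d)" for c d
    proof (cases "c \<in> set (s 0)")
      case True
      then have "count_list (s 0) c \<noteq> 0" by (simp add: count_list_0_iff)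
      then show ?thesis by auto
    next
      case False
      then show ?thesis by (auto simp: after_append dest: after_in)
    qed
    then show ?thesis using 3 unfolding phiE_def by (auto simp: fun_eq_iff add_ac)
  qed
qed

lemma phiF_ax: "(p, q) \<in> F_ids \<Longrightarrow> phiF (subst s p) = phiF (subst s q)"
proof -
  assume "(p, q) \<in> F_ids"
  then consider "p = [0,1,0]" "q = [0,1,0,0]" | "p = [0,0,1,1]" "q = [1,1,0,0]"
    | "p = [0,1,2,0,1]" "q = [1,0,2,0,1]" | "p = [0,0,1]" "q = [0,0,1,0]"
    unfolding F_ids_def by auto
  then show ?thesis
  proof cases
    case 1
    have "min 2 (count_list (takeWhile (\<lambda>c. c \<noteq> t) (s 0 @ s 1 @ s 0)) x) =
          min 2 (count_list (takeWhile (\<lambda>c. c \<noteq> t) (s 0 @ s 1 @ s 0 @ s 0)) x)"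
      if "count_list (s 0 @ s 1 @ s 0) t = 1" for t x
    proof -
      have "t \<notin> set (s 0)" using that by (auto simp: in_set_cnt)
      moreover have "t \<in> set (s 1)" using that calculation by (simp add: in_set_cnt) arith
      ultimately show ?thesis by (simp add: tw_app_notin tw_app_in)
    qed
    then show ?thesis using 1 unfolding phiF_def by (auto simp: fun_eq_iff)
  next
    case 2
    show ?thesis using 2 unfolding phiF_def apply (auto simp: fun_eq_iff) apply arith+ done
  next
    case 3
    have "min 2 (count_list (takeWhile (\<lambda>c. c \<noteq> t) (s 0 @ s 1 @ s 2 @ s 0 @ s 1)) x) =
          min 2 (count_list (takeWhile (\<lambda>c. c \<noteq> t) (s 1 @ s 0 @ s 2 @ s 0 @ s 1)) x)"
      if "count_list (s 0 @ s 1 @ s 2 @ s 0 @ s 1) t = 1" for t x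
    proof -
      have "t \<notin> set (s 0)" "t \<notin> set (s 1)" using that by (auto simp: in_set_cnt)
      moreover have "t \<in> set (s 2)" using that calculation by (simp add: in_set_cnt) arith
      ultimately show ?thesis by (simp add: tw_app_notin tw_app_in add_ac)
    qed
    then show ?thesis using 3 unfolding phiF_def by (auto simp: fun_eq_iff add_ac)
  next
    case 4
    have "min 2 (count_list (takeWhile (\<lambda>c. c \<noteq> t) (s 0 @ s 0 @ s 1)) x) =
          min 2 (count_list (takeWhile (\<lambda>c. c \<noteq> t) (s 0 @ s 0 @ s 1 @ s 0)) x)"
      if "count_list (s 0 @ s 0 @ s 1) t = 1" for t x
    proof -
      have "t \<notin> set (s 0)" using that by (auto simp: in_set_cnt)
      moreover have "t \<in> set (s 1)" using that calculation by (simp add: in_set_cnt) arith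
      ultimately show ?thesis by (simp add: tw_app_notin tw_app_in)
    qed
    then show ?thesis using 4 unfolding phiF_def by (auto simp: fun_eq_iff)
  qed
qed

lemma FE_invariants:
  assumes "holds_in_FE (u, v)"
  shows "phiE u = phiE v" "phiF u = phiF v"
proof -
  have "(u, v) \<in> eq_theory E_ids" "(u, v) \<in> eq_theory F_ids"
    using assms by (auto simp: holds_in_FE_def)
  then show "phiE u = phiE v" "phiF u = phiF v"
    using eq_theory_invariant_id[of u v E_ids phiE] eq_theory_invariant_id[of u v F_ids phiF]
      phiE_ax phiF_ax phiE_cong phiF_cong by blast+
qed


fun jn :: "nat list \<Rightarrow> nat list list \<Rightarrow> nat list" where
  "jn [] [] = []"
| "jn [] (b # bs) = b"
| "jn (t # ts) [] = []"
| "jn (t # ts) (b # bs) = b @ t # jn ts bs"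

lemma jn_Cons_hd: "jn ts ((x # b) # bs) = x # jn ts (b # bs)"
  by (cases ts) auto

lemma split_join:
  "w = jn (filter P w) (split_at_pred P w) \<and> length (split_at_pred P w) = Suc (length (filter P w))
   \<and> (\<forall>B\<in>set (split_at_pred P w). \<forall>z\<in>set B. \<not> P z)"
proof (induction w)
  case Nil then show ?case by simp
next
  case (Cons x xs)
  define r where "r = split_at_pred P xs"
  have r: "xs = jn (filter P xs) r" "length r = Suc (length (filter P xs))" "\<forall>B\<in>set r. \<forall>z\<in>set B. \<not> P z"
    using Cons.IH by (auto simp: r_def)
  then have rne: "r = hd r # tl r" by (cases r) auto
  show ?case
  proof (cases "P x")
    case True then show ?thesis using r by (simp add: r_def[symmetric] Let_def)
  next
    case False
    have "jn (filter P xs) ((x # hd r) # tl r) = x # jn (filter P xs) (hd r # tl r)" by (rule jn_Cons_hd)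
    also have "\<dots> = x # xs" using r rne by simp
    finally have 1: "jn (filter P xs) ((x # hd r) # tl r) = x # xs" .
    have 2: "length ((x # hd r) # tl r) = Suc (length (filter P xs))" using r(2) rne
      by (metis length_Cons)
    have 3: "\<forall>B\<in>set ((x # hd r) # tl r). \<forall>z\<in>set B. \<not> P z"
    proof (intro ballI)
      fix B z assume "B \<in> set ((x # hd r) # tl r)" "z \<in> set B"
      then show "\<not> P z" using r(3) False rne by (cases r) auto
    qed
    show ?thesis using False 1 2 3 by (simp add: r_def[symmetric] Let_def)
  qed
qed

lemma split_ne: "split_at_pred P w \<noteq> []"
  by (induction w) (auto simp: Let_def)

lemma split_app_noP:
  "\<forall>z\<in>set B. \<not> P z \<Longrightarrow> split_at_pred P (B @ w) = (B @ hd (split_at_pred P w)) # tl (split_at_pred P w)"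
  using split_ne[of P w] by (induction B) (auto simp: Let_def)


lemma split_of_jn:
  "length bs = Suc (length ts) \<Longrightarrow> \<forall>t\<in>set ts. P t \<Longrightarrow> \<forall>B\<in>set bs. \<forall>z\<in>set B. \<not> P z
   \<Longrightarrow> split_at_pred P (jn ts bs) = bs"
proof (induction ts arbitrary: bs)
  case Nil
  then obtain b where b: "bs = [b]" by (cases bs) auto
  then show ?case using split_app_noP[of b P "[]"] Nil by simp
next
  case (Cons t ts)
  then obtain b bs' where b: "bs = b # bs'" by (cases bs) auto
  have IH: "split_at_pred P (jn ts bs') = bs'" using Cons b by auto
  have "split_at_pred P (jn (t # ts) bs) = split_at_pred P (b @ t # jn ts bs')" using b by simp
  also have "\<dots> = (b @ hd (split_at_pred P (t # jn ts bs'))) # tl (split_at_pred P (t # jn ts bs'))"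
    using Cons.prems b by (intro split_app_noP) auto
  also have "\<dots> = b # bs'" using IH Cons.prems by (simp add: Let_def)
  finally show ?case using b by simp
qed

lemma filter_jn:
  "length bs = Suc (length ts) \<Longrightarrow> \<forall>t\<in>set ts. P t \<Longrightarrow> \<forall>B\<in>set bs. \<forall>z\<in>set B. \<not> P z
   \<Longrightarrow> filter P (jn ts bs) = ts"
proof (induction ts arbitrary: bs)
  case Nil
  then obtain b where b: "bs = [b]" by (cases bs) auto
  then show ?case using Nil by (auto simp: filter_empty_conv)
next
  case (Cons t ts)
  then obtain b bs' where b: "bs = b # bs'" by (cases bs) auto
  have "filter P b = []" using Cons.prems b by (auto simp: filter_empty_conv)
  then show ?case using Cons b by auto
qed

lemma count_jn:
  "length bs = Suc (length ts) \<Longrightarrow> count_list (jn ts bs) x = count_list (concat bs) x + count_list ts x"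
proof (induction ts arbitrary: bs)
  case Nil then obtain b where b: "bs = [b]" by (cases bs) auto
  then show ?case by simp
next
  case (Cons t ts) then obtain b bs' where b: "bs = b # bs'" by (cases bs) auto
  then show ?case using Cons by auto
qed

lemma set_jn:
  "length bs = Suc (length ts) \<Longrightarrow> set (jn ts bs) = set (concat bs) \<union> set ts"
proof (induction ts arbitrary: bs)
  case Nil then obtain b where b: "bs = [b]" by (cases bs) auto
  then show ?case by simp
next
  case (Cons t ts) then obtain b bs' where b: "bs = b # bs'" by (cases bs) auto
  then show ?case using Cons by auto
qed

lemma jn_split:
  assumes "length bs = Suc (length ts)" "i < length bs"
  shows "\<exists>pre post. (\<forall>B. jn ts (bs[i:=B]) = pre @ B @ post) \<and> (i = 0 \<longrightarrow> pre = []) \<and>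
    (0 < i \<longrightarrow> (\<exists>X. pre = X @ [ts!(i-1)] \<and> mset X = mset (concat (take i bs)) + mset (take (i-1) ts))) \<and>
    (i < length ts \<longrightarrow> (\<exists>Y. post = ts!i # Y \<and> mset Y = mset (concat (drop (Suc i) bs)) + mset (drop (Suc i) ts)))"
  using assms
proof (induction ts arbitrary: bs i)
  case Nil then obtain b where b: "bs = [b]" by (cases bs) auto
  then have "i = 0" using Nil by simp
  then show ?case using b by (intro exI[of _ "[]"]) auto
next
  case (Cons t ts)
  then obtain b bs' where b: "bs = b # bs'" by (cases bs) auto
  have lb: "length bs' = Suc (length ts)" using Cons b by simp
  show ?case
  proof (cases i)
    case 0
    have "mset (jn ts bs') = mset (concat bs') + mset ts"
      using count_jn[OF lb] by (simp add: multiset_eq_iff count_mset)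
    then show ?thesis using b 0
      by (intro exI[of _ "[]"] exI[of _ "t # jn ts bs'"]) auto
  next
    case (Suc j)
    then have j: "j < length bs'" using Cons.prems b by simp
    obtain pre post where P: "\<forall>B. jn ts (bs'[j:=B]) = pre @ B @ post" "j = 0 \<longrightarrow> pre = []"
      "0 < j \<longrightarrow> (\<exists>X. pre = X @ [ts!(j-1)] \<and> mset X = mset (concat (take j bs')) + mset (take (j-1) ts))"
      "j < length ts \<longrightarrow> (\<exists>Y. post = ts!j # Y \<and> mset Y = mset (concat (drop (Suc j) bs')) + mset (drop (Suc j) ts))"
      using Cons.IH[OF lb j] by blast
    have A: "\<forall>B. jn (t # ts) (bs[i:=B]) = (b @ t # pre) @ B @ post" using P(1) b Suc by simp
    have X: "\<exists>X. b @ t # pre = X @ [(t # ts)!(i-1)] \<and> mset X = mset (concat (take i bs)) + mset (take (i-1) (t # ts))"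
    proof (cases j)
      case 0 then show ?thesis using P(2) b Suc by (intro exI[of _ b]) auto
    next
      case (Suc k)
      then obtain X where X: "pre = X @ [ts!(j-1)]" "mset X = mset (concat (take j bs')) + mset (take (j-1) ts)"
        using P(3) by auto
      show ?thesis using X b Suc \<open>i = Suc j\<close> by (intro exI[of _ "b @ t # X"]) auto
    qed
    have Y: "i < length (t # ts) \<longrightarrow> (\<exists>Y. post = (t # ts)!i # Y \<and> mset Y = mset (concat (drop (Suc i) bs)) + mset (drop (Suc i) (t # ts)))"
      using P(4) b Suc by auto
    show ?thesis using A X Y Suc by blast
  qed
qed

definition good :: "nat list \<Rightarrow> nat list list \<Rightarrow> bool" where
  "good ts bs \<longleftrightarrow> length bs = Suc (length ts) \<and> distinct ts \<and>
     (\<forall>B\<in>set bs. \<forall>z\<in>set B. z \<notin> set ts \<and> 2 \<le> count_list (concat bs) z)"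

lemma distinct_count1: "distinct ts \<Longrightarrow> t \<in> set ts \<Longrightarrow> count_list ts t = 1"
  by (induction ts) (auto simp: count_list_0_iff)

lemma good_simple:
  assumes "good ts bs"
  shows "simple_letters (jn ts bs) = ts" "blocks (jn ts bs) = bs"
proof -
  let ?w = "jn ts bs"
  let ?P = "\<lambda>x. count_list ?w x = 1"
  have L: "length bs = Suc (length ts)" using assms by (simp add: good_def)
  have T: "\<forall>t\<in>set ts. ?P t"
  proof
    fix t assume t: "t \<in> set ts"
    have "t \<notin> set (concat bs)" using assms t by (auto simp: good_def)
    then have "count_list (concat bs) t = 0" by (simp add: count_list_0_iff)
    then show "?P t" using count_jn[OF L, of t] distinct_count1[of ts t] t assms by (simp add: good_def)
  qed
  have B: "\<forall>B\<in>set bs. \<forall>z\<in>set B. \<not> ?P z"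
  proof (intro ballI)
    fix B z assume "B \<in> set bs" "z \<in> set B"
    then have "z \<notin> set ts" "2 \<le> count_list (concat bs) z" using assms by (auto simp: good_def)
    then show "\<not> ?P z" using count_jn[OF L, of z] by (simp add: count_list_0_iff)
  qed
  show "simple_letters ?w = ts" unfolding simple_letters_def using filter_jn[OF L T B] .
  show "blocks ?w = bs" unfolding blocks_def using split_of_jn[OF L T B] .
qed

lemma wb_good:
  assumes "good ts bu" "good ts bv" "\<forall>i<length bu. mset (bu!i) = mset (bv!i)"
  shows "well_balanced (jn ts bu) (jn ts bv)"
  using assms good_simple[OF assms(1)] good_simple[OF assms(2)]
  unfolding well_balanced_def by (auto simp: list_all2_conv_all_nth good_def)


lemma O2_in: "([0,2,0,1,0,3,1], [0,2,1,0,3,1]) \<in> O_ids" by (simp add: O_ids_def)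

lemma O1:
  assumes "O_ids \<subseteq> S"
  shows "(P @ y # Z @ y # y # T, P @ y # Z @ y # T) \<in> eq_theory S"
proof -
  let ?s = "\<lambda>n::nat. if n = 0 then [y] else if n = 1 then [] else if n = 2 then Z else T"
  have "(P @ subst ?s [0,2,0,1,0,3,1] @ [], P @ subst ?s [0,2,1,0,3,1] @ []) \<in> eq_theory O_ids"
    by (rule eq_theory_inst[OF O2_in])
  then have "(P @ y # Z @ y # y # T, P @ y # Z @ y # T) \<in> eq_theory O_ids" by simp
  then show ?thesis using eq_theory_mono[OF assms] by blast
qed

lemma extra_inst:
  assumes "extra_id \<in> S"
  shows "(P @ x # Y @ x # Z @ T @ x # R, P @ x # Y @ x # Z @ x # T @ x # R) \<in> eq_theory S"
proof -
  let ?s = "\<lambda>n::nat. if n = 0 then [x] else if n = 1 then Y else if n = 2 then Z else T"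
  have "(P @ subst ?s [0,1,0,2,3,0] @ R, P @ subst ?s [0,1,0,2,0,3,0] @ R) \<in> eq_theory S"
    by (rule eq_theory_inst) (use assms in \<open>simp add: extra_id_def\<close>)
  then show ?thesis by simp
qed

lemma R1:
  assumes "O_ids \<subseteq> S" "2 \<le> a"
  shows "(replicate a y @ W, [y, y] @ W) \<in> eq_theory S"
  using assms(2)
proof (induction a rule: nat_less_induct)
  case (1 a)
  show ?case
  proof (cases "a = 2")
    case True then show ?thesis by (simp add: numeral_2_eq_2 eq_theory.refl)
  next
    case False
    then obtain k where k: "a = Suc (Suc (Suc k))" using 1(2)
      by (metis add_2_eq_Suc le_Suc_ex le_antisym not_less_eq_eq numeral_2_eq_2)
    have "(replicate a y @ W, replicate (Suc (Suc k)) y @ W) \<in> eq_theory S"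
      using O1[OF assms(1), of "[]" y "[]" "replicate k y @ W"] k by simp
    moreover have "(replicate (Suc (Suc k)) y @ W, [y, y] @ W) \<in> eq_theory S"
      using 1(1) k by auto
    ultimately show ?thesis by (rule eq_theory.trans)
  qed
qed

lemma R2:
  assumes "O_ids \<subseteq> S" "y \<in> set P" "1 \<le> b"
  shows "(P @ replicate b y @ W, P @ [y] @ W) \<in> eq_theory S"
  using assms(3)
proof (induction b rule: nat_less_induct)
  case (1 b)
  obtain P1 Z where P: "P = P1 @ y # Z" using assms(2) by (meson split_list)
  show ?case
  proof (cases "b = 1")
    case True then show ?thesis by (simp add: eq_theory.refl)
  next
    case False
    then obtain k where k: "b = Suc (Suc k)" using 1(2)
      by (metis One_nat_def Suc_le_D le_antisym not_less_eq_eq)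
    have "(P @ replicate b y @ W, P @ replicate (Suc k) y @ W) \<in> eq_theory S"
      using O1[OF assms(1), of P1 y Z "replicate k y @ W"] k P by simp
    moreover have "(P @ replicate (Suc k) y @ W, P @ [y] @ W) \<in> eq_theory S"
      using 1(1) k by auto
    ultimately show ?thesis by (rule eq_theory.trans)
  qed
qed

lemma red_u:
  assumes "O_ids \<subseteq> S" "2 \<le> a" "1 \<le> b" "1 \<le> c"
  shows "(replicate a 0 @ 2 # replicate b 0 @ 3 # replicate c 0, [0,0,2,0,3,0]) \<in> eq_theory S"
proof -
  have s1: "(replicate a 0 @ 2 # replicate b 0 @ 3 # replicate c 0, [0,0] @ 2 # replicate b 0 @ 3 # replicate c 0) \<in> eq_theory S"
    by (rule R1[OF assms(1,2)])
  have s2: "([0,0,2] @ replicate b 0 @ 3 # replicate c 0, [0,0,2] @ [0] @ 3 # replicate c 0) \<in> eq_theory S"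
    by (rule R2[OF assms(1) _ assms(3)]) simp
  have s3: "([0,0,2,0,3] @ replicate c 0 @ [], [0,0,2,0,3] @ [0] @ []) \<in> eq_theory S"
    by (rule R2[OF assms(1) _ assms(4)]) simp
  show ?thesis using eq_theory.trans[OF s1 eq_theory.trans[OF _ s3]] s2 by simp
qed

lemma red_v:
  assumes "O_ids \<subseteq> S" "2 \<le> a" "1 \<le> c"
  shows "(replicate a 0 @ 2 # 3 # replicate c 0, [0,0,2,3,0]) \<in> eq_theory S"
proof -
  have s1: "(replicate a 0 @ 2 # 3 # replicate c 0, [0,0] @ 2 # 3 # replicate c 0) \<in> eq_theory S"
    by (rule R1[OF assms(1,2)])
  have s3: "([0,0,2,3] @ replicate c 0 @ [], [0,0,2,3] @ [0] @ []) \<in> eq_theory S"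
    by (rule R2[OF assms(1) _ assms(3)]) simp
  have s1': "(replicate a 0 @ 2 # 3 # replicate c 0, [0,0,2,3] @ replicate c 0) \<in> eq_theory S"
    using s1 by simp
  have s3': "([0,0,2,3] @ replicate c 0, [0,0,2,3,0]) \<in> eq_theory S" using s3 by simp
  show ?thesis using eq_theory.trans[OF s1' s3'] .
qed

lemma extra_from_D:
  assumes "O_ids \<subseteq> S" "([0,0,2,0,3,0], [0,0,2,3,0]) \<in> eq_theory S"
  shows "extra_id \<in> eq_theory S"
proof -
  have s1: "([0,1] @ replicate 3 0 @ [2,3,0], [0,1] @ [0] @ [2,3,0]) \<in> eq_theory S"
    by (rule R2[OF assms(1)]) auto
  let ?s = "\<lambda>n::nat. if n = 2 then [0,2] else [n]"
  have s2: "([0,1] @ subst ?s [0,0,2,0,3,0] @ [], [0,1] @ subst ?s [0,0,2,3,0] @ []) \<in> eq_theory S"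
    by (rule eq_theory.mult, rule eq_theory.subst, rule assms(2))
  have s3: "([0,1] @ replicate 3 0 @ [2,0,3,0], [0,1] @ [0] @ [2,0,3,0]) \<in> eq_theory S"
    by (rule R2[OF assms(1)]) auto
  have "([0,1,0,2,3,0], [0,1,0,0,0,2,3,0]) \<in> eq_theory S"
    using eq_theory.sym[OF s1] by (simp add: numeral_3_eq_3)
  moreover have "([0,1,0,0,0,2,3,0], [0,1,0,0,0,2,0,3,0]) \<in> eq_theory S"
    using eq_theory.sym[OF s2] by simp
  moreover have "([0,1,0,0,0,2,0,3,0], [0,1,0,2,0,3,0]) \<in> eq_theory S"
    using s3 by (simp add: numeral_3_eq_3)
  ultimately show ?thesis unfolding extra_id_def by (meson eq_theory.trans)
qed


lemma cnt_ge1: "x \<in> set w \<Longrightarrow> 1 \<le> count_list w x"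
proof -
  assume "x \<in> set w"
  then have "count_list w x \<noteq> 0" by (simp add: count_list_0_iff)
  then show ?thesis by simp
qed

definition cp :: "nat list list \<Rightarrow> nat \<Rightarrow> nat \<Rightarrow> nat" where
  "cp bs k x = count_list (concat (take k bs)) x"

lemma distinct_nth_notin_take: "distinct ts \<Longrightarrow> k < length ts \<Longrightarrow> j \<le> k \<Longrightarrow> ts!k \<notin> set (take j ts)"
  by (auto simp: in_set_conv_nth nth_eq_iff_index_eq)

lemma distinct_nth_notin_drop: "distinct ts \<Longrightarrow> k < length ts \<Longrightarrow> k < j \<Longrightarrow> ts!k \<notin> set (drop j ts)"
  by (auto simp: in_set_conv_nth nth_eq_iff_index_eq)

lemma subst_rep:
  assumes "x \<noteq> t1" "x \<noteq> t2" "\<forall>y\<in>set W. y \<noteq> t1 \<and> y \<noteq> t2"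
  shows "subst (\<lambda>y. if y = x then [0] else if y = t1 then [2] else if y = t2 then [3] else []) W
         = replicate (count_list W x) 0"
  using assms(3) by (induction W) auto

lemma good_blocks_notin: "good ts bs \<Longrightarrow> y \<in> set (concat bs) \<Longrightarrow> y \<notin> set ts"
  by (auto simp: good_def)

lemma mset_set_count:
  assumes "mset W = mset A + mset B"
  shows "set W = set A \<union> set B" "count_list W x = count_list A x + count_list B x"
proof -
  show "set W = set A \<union> set B" using arg_cong[OF assms, of set_mset] by simp
  show "count_list W x = count_list A x + count_list B x"
    using arg_cong[OF assms, of "\<lambda>M. count M x"] by (simp add: count_mset)
qed

lemma word_shape:
  assumes "good ts bs" "0 < i" "i < length ts"
  shows "\<exists>X Y. jn ts bs = X @ ts!(i-1) # bs!i @ ts!i # Y \<and>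
     set X = set (concat (take i bs)) \<union> set (take (i-1) ts) \<and>
     count_list X x = count_list (concat (take i bs)) x + count_list (take (i-1) ts) x \<and>
     set Y = set (concat (drop (Suc i) bs)) \<union> set (drop (Suc i) ts) \<and>
     count_list Y x = count_list (concat (drop (Suc i) bs)) x + count_list (drop (Suc i) ts) x"
proof -
  have L: "length bs = Suc (length ts)" "i < length bs" using assms by (auto simp: good_def)
  obtain pre post where P: "\<forall>B. jn ts (bs[i:=B]) = pre @ B @ post"
    "0 < i \<longrightarrow> (\<exists>X. pre = X @ [ts!(i-1)] \<and> mset X = mset (concat (take i bs)) + mset (take (i-1) ts))"
    "i < length ts \<longrightarrow> (\<exists>Y. post = ts!i # Y \<and> mset Y = mset (concat (drop (Suc i) bs)) + mset (drop (Suc i) ts))"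
    using jn_split[OF L] by blast
  obtain X where X: "pre = X @ [ts!(i-1)]" "mset X = mset (concat (take i bs)) + mset (take (i-1) ts)"
    using P(2) assms by blast
  obtain Y where Y: "post = ts!i # Y" "mset Y = mset (concat (drop (Suc i) bs)) + mset (drop (Suc i) ts)"
    using P(3) assms by blast
  have "jn ts bs = pre @ bs!i @ post" using P(1)[rule_format, of "bs!i"] by simp
  then show ?thesis using X Y mset_set_count[OF X(2)] mset_set_count[OF Y(2)]
    by (intro exI[of _ X] exI[of _ Y]) simp
qed

lemma discrepancy_D:
  assumes gu: "good ts bu" and gv: "good ts bv" and i: "i < length bu"
    and xu: "x \<in> set (bu!i)" and xv: "x \<notin> set (bv!i)"
    and cu: "2 \<le> cp bu i x" and cv: "2 \<le> cp bv i x"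
    and au: "x \<in> set (concat (drop (Suc i) bu))" and av: "x \<in> set (concat (drop (Suc i) bv))"
  shows "([0,0,2,0,3,0], [0,0,2,3,0]) \<in> eq_theory (O_ids \<union> {(jn ts bu, jn ts bv)})"
proof -
  let ?S = "O_ids \<union> {(jn ts bu, jn ts bv)}"
  have i0: "0 < i" using cu by (cases i) (auto simp: cp_def)
  have lb: "length bu = Suc (length ts)" "length bv = Suc (length ts)" using gu gv by (auto simp: good_def)
  have its: "i < length ts"
  proof (rule ccontr)
    assume "\<not> i < length ts" then have "drop (Suc i) bu = []" using lb by simp
    then show False using au by simp
  qed
  have dts: "distinct ts" using gu by (simp add: good_def)
  have xin: "x \<in> set (concat bu)" using xu i by auto
  have xts: "x \<notin> set ts" using good_blocks_notin[OF gu xin] .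
  define t1 where "t1 = ts!(i-1)"
  define t2 where "t2 = ts!i"
  have t1ts: "t1 \<in> set ts" "t2 \<in> set ts" using its i0 by (auto simp: t1_def t2_def)
  have xt: "x \<noteq> t1" "x \<noteq> t2" using xts t1ts by auto
  have t1_take: "t1 \<notin> set (take (i-1) ts)" "t2 \<notin> set (take (i-1) ts)"
    using distinct_nth_notin_take[OF dts, of "i-1" "i-1"] distinct_nth_notin_take[OF dts its, of "i-1"] its
    by (auto simp: t1_def t2_def)
  have t1_drop: "t1 \<notin> set (drop (Suc i) ts)" "t2 \<notin> set (drop (Suc i) ts)"
    using distinct_nth_notin_drop[OF dts, of "i-1" "Suc i"] distinct_nth_notin_drop[OF dts its, of "Suc i"] its
    by (auto simp: t1_def t2_def)
  have t12: "t1 \<noteq> t2" using dts its i0 by (simp add: t1_def t2_def nth_eq_iff_index_eq)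
  let ?s = "\<lambda>y. if y = x then [0] else if y = t1 then [2] else if y = t2 then [3] else []"
  have shape: "subst ?s (jn ts bs) = replicate (cp bs i x) 0 @ 2 # replicate (count_list (bs!i) x) 0 @ 3 #
      replicate (count_list (concat (drop (Suc i) bs)) x) 0" if g: "good ts bs" for bs
  proof -
    obtain X Y where XY: "jn ts bs = X @ t1 # bs!i @ t2 # Y"
      "set X = set (concat (take i bs)) \<union> set (take (i-1) ts)"
      "count_list X x = count_list (concat (take i bs)) x + count_list (take (i-1) ts) x"
      "set Y = set (concat (drop (Suc i) bs)) \<union> set (drop (Suc i) ts)"
      "count_list Y x = count_list (concat (drop (Suc i) bs)) x + count_list (drop (Suc i) ts) x"
      using word_shape[OF g i0 its, of x] unfolding t1_def t2_def by blast
    have nb: "y \<notin> set ts" if "y \<in> set (concat bs)" for y using good_blocks_notin[OF g that] .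
    have lbs: "i < length bs" using g its by (simp add: good_def)
    have c1: "count_list (take (i-1) ts) x = 0" "count_list (drop (Suc i) ts) x = 0"
      using xts by (auto simp: count_list_0_iff dest: in_set_takeD in_set_dropD)
    have sX: "\<forall>y\<in>set X. y \<noteq> t1 \<and> y \<noteq> t2"
      using XY(2) t1_take t1ts nb by (auto dest: in_set_takeD)
    have sB: "\<forall>y\<in>set (bs!i). y \<noteq> t1 \<and> y \<noteq> t2"
      using t1ts nb nth_mem[OF lbs] by auto
    have sY: "\<forall>y\<in>set Y. y \<noteq> t1 \<and> y \<noteq> t2"
      using XY(4) t1_drop t1ts nb by (auto dest: in_set_dropD)
    show ?thesis using XY(1,3,5) c1 subst_rep[OF xt sX] subst_rep[OF xt sB] subst_rep[OF xt sY] xt t12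
      by (simp add: cp_def)
  qed
  have OS: "O_ids \<subseteq> ?S" by blast
  have e: "(subst ?s (jn ts bu), subst ?s (jn ts bv)) \<in> eq_theory ?S"
    using eq_theory_inst[of "jn ts bu" "jn ts bv" ?S "[]" ?s "[]"] by simp
  have b1: "1 \<le> count_list (bu!i) x" using xu by (rule cnt_ge1)
  have bv0: "count_list (bv!i) x = 0" using xv by (simp add: count_list_0_iff)
  have c1: "1 \<le> count_list (concat (drop (Suc i) bu)) x" using au by (rule cnt_ge1)
  have c2: "1 \<le> count_list (concat (drop (Suc i) bv)) x" using av by (rule cnt_ge1)
  have ru: "(subst ?s (jn ts bu), [0,0,2,0,3,0]) \<in> eq_theory ?S"
    unfolding shape[OF gu] by (rule red_u[OF OS cu b1 c1])
  have rv: "(subst ?s (jn ts bv), [0,0,2,3,0]) \<in> eq_theory ?S"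
    unfolding shape[OF gv] bv0 using red_v[OF OS cv c2] by simp
  show ?thesis by (meson eq_theory.sym eq_theory.trans ru rv e)
qed


lemma two_occ: "2 \<le> count_list w x \<Longrightarrow> \<exists>P Y Z. w = P @ x # Y @ x # Z"
proof -
  assume a: "2 \<le> count_list w x"
  then have "x \<in> set w" using count_list_0_iff[of w x] by auto
  then obtain P w' where w: "w = P @ x # w'" "x \<notin> set P" by (meson split_list_first)
  then have "count_list P x = 0" by (simp add: count_list_0_iff)
  then have "count_list w' x \<noteq> 0" using a w by simp
  then have "x \<in> set w'" using count_list_0_iff[of w' x] by auto
  then obtain Y Z where "w' = Y @ x # Z" by (meson split_list)
  then show ?thesis using w by blast
qed

lemma count_concat_upd:
  "i < length bs \<Longrightarrow> count_list (concat (bs[i:=B])) z + count_list (bs!i) z = count_list (concat bs) z + count_list B z"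
proof -
  assume i: "i < length bs"
  have b: "bs = take i bs @ bs!i # drop (Suc i) bs" by (rule id_take_nth_drop[OF i])
  have e: "count_list (concat bs) z = count_list (concat (take i bs)) z + count_list (bs!i) z + count_list (concat (drop (Suc i) bs)) z"
    using arg_cong[OF b, of "\<lambda>l. count_list (concat l) z"] by simp
  show ?thesis using i e by (simp add: upd_conv_take_nth_drop)
qed

lemma set_concat_upd:
  "i < length bs \<Longrightarrow> set (concat (bs[i:=B])) \<subseteq> set (concat bs) \<union> set B"
  by (auto simp: upd_conv_take_nth_drop dest: in_set_takeD in_set_dropD)

lemma cp_upd:
  assumes "i < length bs" "mset B = mset (bs!i) + replicate_mset k x"
  shows "cp (bs[i:=B]) j z = cp bs j z + (if i < j \<and> z = x then k else 0)"
proof (cases "i < j")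
  case True
  have l: "i < length (take j bs)" using assms True by simp
  have cB: "count_list B z = count_list (bs!i) z + (if z = x then k else 0)"
    using arg_cong[OF assms(2), of "\<lambda>M. count M z"] by (simp add: count_mset)
  have "count_list (concat ((take j bs)[i:=B])) z + count_list ((take j bs)!i) z =
        count_list (concat (take j bs)) z + count_list B z" by (rule count_concat_upd[OF l])
  then show ?thesis using True cB by (simp add: cp_def take_update_swap)
next
  case False
  then have "(take j bs)[i:=B] = take j bs" by (simp add: list_update_beyond)
  then show ?thesis using False by (simp add: cp_def take_update_swap)
qed

lemma T_upd:
  assumes "i < length bs" "mset B = mset (bs!i) + replicate_mset k x"
  shows "count_list (concat (bs[i:=B])) z = count_list (concat bs) z + (if z = x then k else 0)"
proof -
  have cB: "count_list B z = count_list (bs!i) z + (if z = x then k else 0)"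
    using arg_cong[OF assms(2), of "\<lambda>M. count M z"] by (simp add: count_mset)
  then show ?thesis using count_concat_upd[OF assms(1), of B z] by simp
qed

lemma good_upd:
  assumes g: "good ts bs" and i: "i < length bs" and x: "x \<in> set (concat bs)"
    and B: "mset B = mset (bs!i) + replicate_mset k x"
  shows "good ts (bs[i:=B])"
proof -
  have sB: "set B \<subseteq> set (bs!i) \<union> {x}"
    using arg_cong[OF B, of set_mset] by (cases k) auto
  have "set (bs!i) \<subseteq> set (concat bs)" using nth_mem[OF i] by auto
  then have sc: "set (concat (bs[i:=B])) \<subseteq> set (concat bs)" using set_concat_upd[OF i, of B] sB x by auto
  have H: "z \<notin> set ts \<and> 2 \<le> count_list (concat (bs[i:=B])) z" if "z \<in> set (concat (bs[i:=B]))" for z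
  proof -
    have z: "z \<in> set (concat bs)" using that sc by auto
    then obtain C where "C \<in> set bs" "z \<in> set C" by auto
    then have "z \<notin> set ts \<and> 2 \<le> count_list (concat bs) z" using g by (auto simp: good_def)
    then show ?thesis using T_upd[OF i B, of z] by auto
  qed
  have "\<forall>C\<in>set (bs[i:=B]). \<forall>z\<in>set C. z \<notin> set ts \<and> 2 \<le> count_list (concat (bs[i:=B])) z"
  proof (intro ballI)
    fix C z assume "C \<in> set (bs[i:=B])" "z \<in> set C"
    then have "z \<in> set (concat (bs[i:=B]))" by auto
    then show "z \<notin> set ts \<and> 2 \<le> count_list (concat (bs[i:=B])) z" by (rule H)
  qed
  then show ?thesis using g unfolding good_def by simp
qed

lemma T_split: "count_list (concat bs) x = cp bs k x + count_list (concat (drop k bs)) x"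
  unfolding cp_def by (metis append_take_drop_id concat_append count_list_append)

lemma in_drop_iff: "x \<in> set (concat (drop k bs)) \<longleftrightarrow> cp bs k x < count_list (concat bs) x"
  using T_split[of bs x k] count_list_0_iff[of "concat (drop k bs)" x] by auto

lemma cp_Suc: "i < length bs \<Longrightarrow> cp bs (Suc i) x = cp bs i x + count_list (bs!i) x"
  by (simp add: cp_def take_Suc_conv_app_nth)

lemma cp_0[simp]: "cp bs 0 x = 0" by (simp add: cp_def)

lemma cp_mono: "j \<le> k \<Longrightarrow> cp bs j x \<le> cp bs k x"
proof -
  assume "j \<le> k"
  then have "take k bs = take j bs @ take (k - j) (drop j bs)"
    by (metis le_add_diff_inverse take_add)
  then show ?thesis by (simp add: cp_def)
qed


lemma ins_extra:
  assumes g: "good ts bs" and i: "i < length bs" and c: "2 \<le> cp bs i x"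
    and a: "x \<in> set (concat (drop (Suc i) bs))" and e: "extra_id \<in> S"
  shows "(jn ts bs, jn ts (bs[i := x # bs!i])) \<in> eq_theory S"
proof -
  have L: "length bs = Suc (length ts)" using g by (simp add: good_def)
  have i0: "0 < i" using c by (cases i) auto
  have its: "i < length ts"
  proof (rule ccontr)
    assume "\<not> i < length ts" then have "drop (Suc i) bs = []" using L by simp
    then show False using a by simp
  qed
  obtain pre post where P: "\<forall>B. jn ts (bs[i:=B]) = pre @ B @ post"
    "0 < i \<longrightarrow> (\<exists>X. pre = X @ [ts!(i-1)] \<and> mset X = mset (concat (take i bs)) + mset (take (i-1) ts))"
    "i < length ts \<longrightarrow> (\<exists>Y. post = ts!i # Y \<and> mset Y = mset (concat (drop (Suc i) bs)) + mset (drop (Suc i) ts))"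
    using jn_split[OF L i] by blast
  obtain X where X: "pre = X @ [ts!(i-1)]" "mset X = mset (concat (take i bs)) + mset (take (i-1) ts)"
    using P(2) i0 by blast
  obtain Y where Y: "post = ts!i # Y" "mset Y = mset (concat (drop (Suc i) bs)) + mset (drop (Suc i) ts)"
    using P(3) its by blast
  have "2 \<le> count_list X x" using mset_set_count(2)[OF X(2), of x] c by (simp add: cp_def)
  then obtain P0 Y0 Z0 where X2: "X = P0 @ x # Y0 @ x # Z0" using two_occ[of X x] by blast
  have "x \<in> set Y" using mset_set_count(1)[OF Y(2)] a by auto
  then obtain T0 R where Y2: "Y = T0 @ x # R" by (meson split_list)
  have w1: "jn ts bs = P0 @ x # Y0 @ x # (Z0 @ [ts!(i-1)]) @ (bs!i @ ts!i # T0) @ x # R"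
    using P(1)[rule_format, of "bs!i"] X(1) X2 Y(1) Y2 by simp
  have w2: "jn ts (bs[i := x # bs!i]) = P0 @ x # Y0 @ x # (Z0 @ [ts!(i-1)]) @ x # (bs!i @ ts!i # T0) @ x # R"
    using P(1)[rule_format, of "x # bs!i"] X(1) X2 Y(1) Y2 by simp
  show ?thesis unfolding w1 w2 by (rule extra_inst[OF e])
qed


definition NF :: "nat list list \<Rightarrow> nat \<Rightarrow> nat \<Rightarrow> bool" where
  "NF bs i x \<longleftrightarrow> x \<in> set (bs!i) \<and> (1 \<le> cp bs i x \<or> 2 \<le> count_list (bs!i) x)"

lemma ins_O:
  assumes g: "good ts bs" and i: "i < length bs" and nf: "NF bs i x" and O: "O_ids \<subseteq> S"
  shows "\<exists>B'. mset B' = mset (bs!i) + {#x#} \<and> (jn ts bs, jn ts (bs[i:=B'])) \<in> eq_theory S"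
proof -
  have L: "length bs = Suc (length ts)" using g by (simp add: good_def)
  obtain pre post where P: "\<forall>B. jn ts (bs[i:=B]) = pre @ B @ post"
    "0 < i \<longrightarrow> (\<exists>X. pre = X @ [ts!(i-1)] \<and> mset X = mset (concat (take i bs)) + mset (take (i-1) ts))"
    using jn_split[OF L i] by blast
  have xi: "x \<in> set (bs!i)" using nf by (simp add: NF_def)
  have J: "jn ts bs = pre @ bs!i @ post" using P(1)[rule_format, of "bs!i"] by simp
  show ?thesis
  proof (cases "2 \<le> count_list (bs!i) x")
    case True
    then obtain P0 Y0 Z0 where B: "bs!i = P0 @ x # Y0 @ x # Z0" using two_occ[OF True] by blast
    have w1: "jn ts bs = (pre @ P0) @ x # Y0 @ x # (Z0 @ post)"
      using J B by simp
    have w2: "jn ts (bs[i := P0 @ x # Y0 @ x # x # Z0]) = (pre @ P0) @ x # Y0 @ x # x # (Z0 @ post)"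
      using P(1)[rule_format, of "P0 @ x # Y0 @ x # x # Z0"] by simp
    have "(jn ts bs, jn ts (bs[i := P0 @ x # Y0 @ x # x # Z0])) \<in> eq_theory S"
      unfolding w1 w2 by (rule eq_theory.sym, rule O1[OF O])
    moreover have "mset (P0 @ x # Y0 @ x # x # Z0) = mset (bs!i) + {#x#}" using B by simp
    ultimately show ?thesis by blast
  next
    case False
    then have c: "1 \<le> cp bs i x" using nf by (simp add: NF_def)
    have i0: "0 < i" using c by (cases i) auto
    obtain X where X: "pre = X @ [ts!(i-1)]" "mset X = mset (concat (take i bs)) + mset (take (i-1) ts)"
      using P(2) i0 by blast
    have "x \<in> set X" using mset_set_count(1)[OF X(2)] c count_list_0_iff[of "concat (take i bs)" x]
      by (auto simp: cp_def)
    then obtain P0 Z0 where X2: "X = P0 @ x # Z0" by (meson split_list)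
    obtain A C where B: "bs!i = A @ x # C" using xi by (meson split_list)
    have w1: "jn ts bs = P0 @ x # (Z0 @ [ts!(i-1)] @ A) @ x # (C @ post)"
      using J X(1) X2 B by simp
    have w2: "jn ts (bs[i := A @ x # x # C]) = P0 @ x # (Z0 @ [ts!(i-1)] @ A) @ x # x # (C @ post)"
      using P(1)[rule_format, of "A @ x # x # C"] X(1) X2 by simp
    have "(jn ts bs, jn ts (bs[i := A @ x # x # C])) \<in> eq_theory S"
      unfolding w1 w2 by (rule eq_theory.sym, rule O1[OF O])
    moreover have "mset (A @ x # x # C) = mset (bs!i) + {#x#}" using B by simp
    ultimately show ?thesis by blast
  qed
qed


definition invar :: "nat list \<Rightarrow> nat list list \<Rightarrow> nat list list \<Rightarrow> bool" where
  "invar ts bu bv \<longleftrightarrow> (\<forall>x k. k \<le> Suc (length ts) \<longrightarrow>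
     ((cp bu k x < count_list (concat bu) x) = (cp bv k x < count_list (concat bv) x)) \<and>
     min 2 (cp bu k x) = min 2 (cp bv k x))"

lemma inv_sym: "invar ts bu bv \<Longrightarrow> invar ts bv bu"
  unfolding invar_def by metis

lemma cp_le_T: "cp bs k x \<le> count_list (concat bs) x"
  using T_split[of bs x k] by simp

lemma content_eq:
  assumes "invar ts bu bv"
  shows "set (concat bu) = set (concat bv)"
proof -
  have "x \<in> set (concat bu) \<longleftrightarrow> x \<in> set (concat bv)" for x
    using assms unfolding invar_def
    by (metis cp_0 in_drop_iff drop_0 le0)
  then show ?thesis by auto
qed

lemma claimA:
  assumes gu: "good ts bu" and gv: "good ts bv" and I: "invar ts bu bv" and i: "i < length bu"
    and xu: "x \<in> set (bu!i)" and xv: "x \<notin> set (bv!i)"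
  shows "2 \<le> cp bu i x \<and> 2 \<le> cp bv i x \<and> x \<in> set (concat (drop (Suc i) bu)) \<and> x \<in> set (concat (drop (Suc i) bv))"
proof -
  have lb: "length bu = Suc (length ts)" "length bv = Suc (length ts)" using gu gv by (auto simp: good_def)
  have iv: "i < length bv" using i lb by simp
  have k1: "i \<le> Suc (length ts)" "Suc i \<le> Suc (length ts)" using i lb by auto
  have cu: "1 \<le> count_list (bu!i) x" using xu by (rule cnt_ge1)
  have cv: "count_list (bv!i) x = 0" using xv by (simp add: count_list_0_iff)
  have su: "cp bu (Suc i) x = cp bu i x + count_list (bu!i) x" by (rule cp_Suc[OF i])
  have sv: "cp bv (Suc i) x = cp bv i x" using cp_Suc[OF iv, of x] cv by simp
  have m1: "min 2 (cp bu i x) = min 2 (cp bv i x)" using I k1 by (simp add: invar_def)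
  have m2: "min 2 (cp bu (Suc i) x) = min 2 (cp bv (Suc i) x)" using I k1 by (simp add: invar_def)
  have a1: "(cp bu i x < count_list (concat bu) x) = (cp bv i x < count_list (concat bv) x)"
    using I k1 by (simp add: invar_def)
  have a2: "(cp bu (Suc i) x < count_list (concat bu) x) = (cp bv (Suc i) x < count_list (concat bv) x)"
    using I k1 by (simp add: invar_def)
  have c2: "2 \<le> cp bu i x"
  proof (rule ccontr)
    assume "\<not> 2 \<le> cp bu i x"
    then show False using m1 m2 su sv cu by (simp add: min_def split: if_splits)
  qed
  then have c2': "2 \<le> cp bv i x" using m1 by (simp add: min_def split: if_splits)
  have "cp bu (Suc i) x \<le> count_list (concat bu) x" by (rule cp_le_T)
  then have "cp bu i x < count_list (concat bu) x" using su cu by linarith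
  then have "cp bv (Suc i) x < count_list (concat bv) x" using a1 sv by simp
  then have "cp bu (Suc i) x < count_list (concat bu) x" using a2 by simp
  then show ?thesis using c2 c2' \<open>cp bv (Suc i) x < count_list (concat bv) x\<close>
      in_drop_iff[of x "Suc i" bu] in_drop_iff[of x "Suc i" bv] by blast
qed

lemma stepB:
  assumes gu: "good ts bu" and gv: "good ts bv" and I: "invar ts bu bv" and i: "i < length bu"
    and xu: "x \<in> set (bu!i)" and xv: "x \<notin> set (bv!i)" and e: "extra_id \<in> S"
  shows "good ts (bv[i := x # bv!i]) \<and> (jn ts bv, jn ts (bv[i := x # bv!i])) \<in> eq_theory S
         \<and> invar ts bu (bv[i := x # bv!i])"
proof -
  have A: "2 \<le> cp bu i x" "2 \<le> cp bv i x" "x \<in> set (concat (drop (Suc i) bu))" "x \<in> set (concat (drop (Suc i) bv))"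
    using claimA[OF gu gv I i xu xv] by auto
  have lb: "length bu = Suc (length ts)" "length bv = Suc (length ts)" using gu gv by (auto simp: good_def)
  have iv: "i < length bv" using i lb by simp
  have M: "mset (x # bv!i) = mset (bv!i) + replicate_mset 1 x" by simp
  have xc: "x \<in> set (concat bv)" using A(4) by (auto dest: in_set_dropD)
  let ?bv = "bv[i := x # bv!i]"
  have g: "good ts ?bv" by (rule good_upd[OF gv iv xc M])
  have eq: "(jn ts bv, jn ts ?bv) \<in> eq_theory S" by (rule ins_extra[OF gv iv A(2) A(4) e])
  have lt: "cp bv (Suc i) x < count_list (concat bv) x" using A(4) in_drop_iff[of x "Suc i" bv] by blast
  have "invar ts bu ?bv"
    unfolding invar_def
  proof (intro allI impI)
    fix z k assume k: "k \<le> Suc (length ts)"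
    have cpk: "cp ?bv k z = cp bv k z + (if i < k \<and> z = x then 1 else 0)" by (rule cp_upd[OF iv M])
    have Tk: "count_list (concat ?bv) z = count_list (concat bv) z + (if z = x then 1 else 0)" by (rule T_upd[OF iv M])
    have old: "((cp bu k z < count_list (concat bu) z) = (cp bv k z < count_list (concat bv) z)) \<and>
       min 2 (cp bu k z) = min 2 (cp bv k z)" using I k by (simp add: invar_def)
    show "((cp bu k z < count_list (concat bu) z) = (cp ?bv k z < count_list (concat ?bv) z)) \<and>
       min 2 (cp bu k z) = min 2 (cp ?bv k z)"
    proof (cases "z = x")
      case False then show ?thesis using old cpk Tk by simp
    next
      case True
      show ?thesis
      proof (cases "i < k")
        case True
        have "cp bv i x \<le> cp bv k x" using True by (intro cp_mono) simp
        then show ?thesis using old cpk Tk \<open>z = x\<close> True A(2) by (simp add: min_def)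
      next
        case False
        have "cp bv k x \<le> cp bv (Suc i) x" using False by (intro cp_mono) simp
        then show ?thesis using old cpk Tk \<open>z = x\<close> False lt by auto
      qed
    qed
  qed
  then show ?thesis using g eq by blast
qed

definition Dset :: "nat list list \<Rightarrow> nat list list \<Rightarrow> (nat \<times> nat) set" where
  "Dset bu bv = {(i, x). i < length bu \<and> x \<in> set (concat bu) \<and> (x \<in> set (bu!i)) \<noteq> (x \<in> set (bv!i))}"

lemma Dset_finite: "finite (Dset bu bv)"
proof -
  have "Dset bu bv \<subseteq> {..<length bu} \<times> set (concat bu)" by (auto simp: Dset_def)
  then show ?thesis by (rule finite_subset) auto
qed


lemma Dset_upd:
  assumes "i < length bv" "x \<notin> set (bv!i)" "x \<in> set (bu!i)"
  shows "Dset bu (bv[i := x # bv!i]) = Dset bu bv - {(i, x)}"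
  using assms unfolding Dset_def by (auto simp: nth_list_update split: if_split_asm)

lemma phaseB_aux:
  assumes "card (Dset bu bv) = n" "good ts bu" "good ts bv" "invar ts bu bv" "extra_id \<in> S"
  shows "\<exists>bu' bv'. good ts bu' \<and> good ts bv' \<and> (jn ts bu, jn ts bu') \<in> eq_theory S \<and>
     (jn ts bv, jn ts bv') \<in> eq_theory S \<and> invar ts bu' bv' \<and>
     (\<forall>i<length bu'. \<forall>x. (x \<in> set (bu'!i)) = (x \<in> set (bv'!i)))"
  using assms
proof (induction n arbitrary: bu bv rule: less_induct)
  case (less n)
  have lb: "length bu = Suc (length ts)" "length bv = Suc (length ts)" using less.prems by (auto simp: good_def)
  have ce: "set (concat bu) = set (concat bv)" using content_eq[OF less.prems(4)] .
  show ?case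
  proof (cases "Dset bu bv = {}")
    case True
    have "(x \<in> set (bu!i)) = (x \<in> set (bv!i))" if i: "i < length bu" for i x
    proof (cases "x \<in> set (concat bu)")
      case True then show ?thesis using \<open>Dset bu bv = {}\<close> i unfolding Dset_def by blast
    next
      case False
      then have "x \<notin> set (concat bv)" using ce by blast
      then show ?thesis using False i lb nth_mem[of i bu] nth_mem[of i bv] by auto
    qed
    then show ?thesis using less.prems by (intro exI[of _ bu] exI[of _ bv]) (auto intro: eq_theory.refl)
  next
    case False
    then obtain i x where D: "(i, x) \<in> Dset bu bv" by auto
    then have i: "i < length bu" and xc: "x \<in> set (concat bu)"
      and d: "(x \<in> set (bu!i)) \<noteq> (x \<in> set (bv!i))" by (auto simp: Dset_def)
    have iv: "i < length bv" using i lb by simp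
    have cd: "card (Dset bu bv - {(i, x)}) < n" using D Dset_finite less.prems(1)
      by (metis card_Diff1_less)
    show ?thesis
    proof (cases "x \<in> set (bu!i)")
      case True
      then have xv: "x \<notin> set (bv!i)" using d by simp
      let ?bv = "bv[i := x # bv!i]"
      have S: "good ts ?bv" "(jn ts bv, jn ts ?bv) \<in> eq_theory S" "invar ts bu ?bv"
        using stepB[OF less.prems(2,3,4) i True xv less.prems(5)] by auto
      have "card (Dset bu ?bv) < n" using Dset_upd[OF iv xv True] cd by simp
      then obtain bu' bv' where R: "good ts bu'" "good ts bv'" "(jn ts bu, jn ts bu') \<in> eq_theory S"
        "(jn ts ?bv, jn ts bv') \<in> eq_theory S" "invar ts bu' bv'"
        "\<forall>i<length bu'. \<forall>x. (x \<in> set (bu'!i)) = (x \<in> set (bv'!i))"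
        using less.IH[OF _ HOL.refl less.prems(2) S(1) S(3) less.prems(5)] by blast
      show ?thesis using R eq_theory.trans[OF S(2) R(4)] by blast
    next
      case False
      then have xv: "x \<in> set (bv!i)" using d by simp
      let ?bu = "bu[i := x # bu!i]"
      have S: "good ts ?bu" "(jn ts bu, jn ts ?bu) \<in> eq_theory S" "invar ts bv ?bu"
        using stepB[OF less.prems(3,2) inv_sym[OF less.prems(4)] iv xv False less.prems(5)] by auto
      have "Dset ?bu bv = Dset bu bv - {(i, x)}"
      proof -
        have "set (concat ?bu) = set (concat bu)"
        proof -
          have "set (concat ?bu) \<subseteq> set (concat bu) \<union> set (x # bu!i)" by (rule set_concat_upd[OF i])
          moreover have "set (bu!i) \<subseteq> set (concat bu)" using nth_mem[OF i] by auto
          moreover have "count_list (concat ?bu) z \<ge> count_list (concat bu) z" for z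
            using T_upd[OF i, of "x # bu!i" 1 x z] by simp
          then have "set (concat bu) \<subseteq> set (concat ?bu)" using count_list_0_iff
            by (metis le_zero_eq subsetI)
          ultimately show ?thesis using xc by auto
        qed
        then show ?thesis using i False xv unfolding Dset_def by (auto simp: nth_list_update split: if_split_asm)
      qed
      then have "card (Dset ?bu bv) < n" using cd by simp
      then obtain bu' bv' where R: "good ts bu'" "good ts bv'" "(jn ts ?bu, jn ts bu') \<in> eq_theory S"
        "(jn ts bv, jn ts bv') \<in> eq_theory S" "invar ts bu' bv'"
        "\<forall>i<length bu'. \<forall>x. (x \<in> set (bu'!i)) = (x \<in> set (bv'!i))"
        using less.IH[OF _ HOL.refl S(1) less.prems(3) inv_sym[OF S(3)] less.prems(5)] by blast
      show ?thesis using R eq_theory.trans[OF S(2) R(3)] by blast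
    qed
  qed
qed

lemma phaseB:
  assumes "good ts bu" "good ts bv" "invar ts bu bv" "extra_id \<in> S"
  shows "\<exists>bu' bv'. good ts bu' \<and> good ts bv' \<and> (jn ts bu, jn ts bu') \<in> eq_theory S \<and>
     (jn ts bv, jn ts bv') \<in> eq_theory S \<and> invar ts bu' bv' \<and>
     (\<forall>i<length bu'. \<forall>x. (x \<in> set (bu'!i)) = (x \<in> set (bv'!i)))"
  using phaseB_aux[OF HOL.refl assms] .


lemma count_of_mset: "mset B = mset A + replicate_mset k x \<Longrightarrow> count_list B y = count_list A y + (if y = x then k else 0)"
proof -
  assume a: "mset B = mset A + replicate_mset k x"
  have "count (mset B) y = count (mset A + replicate_mset k x) y" using a by simp
  then show ?thesis by (simp add: count_mset)
qed

lemma set_of_mset: "mset B = mset A + replicate_mset k x \<Longrightarrow> set A \<subseteq> set B"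
proof -
  assume a: "mset B = mset A + replicate_mset k x"
  have "set_mset (mset B) = set_mset (mset A + replicate_mset k x)" using a by simp
  then show ?thesis by auto
qed

lemma NF_mono:
  assumes i: "i < length bs" and B: "mset B = mset (bs!i) + replicate_mset k x" and nf: "NF bs j y"
  shows "NF (bs[i:=B]) j y"
proof -
  have "cp bs j y \<le> cp (bs[i:=B]) j y" using cp_upd[OF i B, of j y] by simp
  moreover have "y \<in> set (bs[i:=B] ! j) \<and> count_list (bs!j) y \<le> count_list (bs[i:=B] ! j) y"
  proof (cases "j = i")
    case True then show ?thesis using nf set_of_mset[OF B] count_of_mset[OF B, of y] i
      by (auto simp: NF_def)
  next
    case False then show ?thesis using nf by (simp add: NF_def)
  qed
  ultimately show ?thesis using nf unfolding NF_def by auto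
qed

lemma raise_k:
  assumes g: "good ts bs" and i: "i < length bs" and nf: "NF bs i x" and O: "O_ids \<subseteq> S"
  shows "\<exists>B'. mset B' = mset (bs!i) + replicate_mset k x \<and> (jn ts bs, jn ts (bs[i:=B'])) \<in> eq_theory S"
proof (induction k)
  case 0 show ?case by (intro exI[of _ "bs!i"]) (simp add: eq_theory.refl)
next
  case (Suc k)
  then obtain B1 where B1: "mset B1 = mset (bs!i) + replicate_mset k x" "(jn ts bs, jn ts (bs[i:=B1])) \<in> eq_theory S"
    by blast
  have xc: "x \<in> set (concat bs)" using nf nth_mem[OF i] by (auto simp: NF_def)
  have g1: "good ts (bs[i:=B1])" by (rule good_upd[OF g i xc B1(1)])
  have i1: "i < length (bs[i:=B1])" using i by simp
  have nf1: "NF (bs[i:=B1]) i x" by (rule NF_mono[OF i B1(1) nf])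
  obtain B2 where B2: "mset B2 = mset (bs[i:=B1] ! i) + {#x#}" "(jn ts (bs[i:=B1]), jn ts ((bs[i:=B1])[i:=B2])) \<in> eq_theory S"
    using ins_O[OF g1 i1 nf1 O] by blast
  have "mset B2 = mset (bs!i) + replicate_mset (Suc k) x" using B2(1) B1(1) i by simp
  moreover have "(jn ts bs, jn ts (bs[i:=B2])) \<in> eq_theory S"
    using eq_theory.trans[OF B1(2) B2(2)] by simp
  ultimately show ?case by blast
qed

definition Uset :: "nat list list \<Rightarrow> nat list list \<Rightarrow> (nat \<times> nat) set" where
  "Uset bu bv = {(i, x). i < length bu \<and> x \<in> set (concat bu) \<and> count_list (bu!i) x \<noteq> count_list (bv!i) x}"

definition pc :: "nat list list \<Rightarrow> nat list list \<Rightarrow> bool" where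
  "pc bu bv \<longleftrightarrow> (\<forall>i<length bu. \<forall>x. count_list (bu!i) x \<noteq> count_list (bv!i) x \<longrightarrow> NF bu i x \<and> NF bv i x)"

lemma Uset_finite: "finite (Uset bu bv)"
proof -
  have "Uset bu bv \<subseteq> {..<length bu} \<times> set (concat bu)" by (auto simp: Uset_def)
  then show ?thesis by (rule finite_subset) auto
qed

lemma pc_sym: "length bu = length bv \<Longrightarrow> pc bu bv \<Longrightarrow> pc bv bu"
  unfolding pc_def by metis

lemma Uset_sym: "length bu = length bv \<Longrightarrow> set (concat bu) = set (concat bv) \<Longrightarrow> Uset bv bu = Uset bu bv"
  unfolding Uset_def by auto

lemma stepC:
  assumes gu: "good ts bu" and P: "pc bu bv" and i: "i < length bu"
    and lt: "count_list (bu!i) x < count_list (bv!i) x" and O: "O_ids \<subseteq> S"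
  shows "\<exists>bu1. good ts bu1 \<and> (jn ts bu, jn ts bu1) \<in> eq_theory S \<and> pc bu1 bv \<and>
     set (concat bu1) = set (concat bu) \<and> length bu1 = length bu \<and> Uset bu1 bv = Uset bu bv - {(i, x)}"
proof -
  let ?k = "count_list (bv!i) x - count_list (bu!i) x"
  have nf: "NF bu i x" using P i lt by (simp add: pc_def)
  obtain B where B: "mset B = mset (bu!i) + replicate_mset ?k x" "(jn ts bu, jn ts (bu[i:=B])) \<in> eq_theory S"
    using raise_k[OF gu i nf O] by blast
  let ?bu = "bu[i:=B]"
  have xc: "x \<in> set (concat bu)" using nf nth_mem[OF i] by (auto simp: NF_def)
  have g1: "good ts ?bu" by (rule good_upd[OF gu i xc B(1)])
  have cB: "count_list B y = count_list (bu!i) y + (if y = x then ?k else 0)" for y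
    by (rule count_of_mset[OF B(1)])
  have cBx: "count_list B x = count_list (bv!i) x" using cB[of x] lt by simp
  have cnt: "count_list (?bu!j) y = count_list (bu!j) y" if "(j, y) \<noteq> (i, x)" for j y
    using that cB i by (cases "j = i") auto
  have T: "count_list (concat ?bu) y = count_list (concat bu) y + (if y = x then ?k else 0)" for y
    by (rule T_upd[OF i B(1)])
  have sc: "set (concat ?bu) = set (concat bu)"
  proof -
    have "y \<in> set (concat ?bu) \<longleftrightarrow> y \<in> set (concat bu)" for y
      using T[of y] xc count_list_0_iff[of "concat ?bu" y] count_list_0_iff[of "concat bu" y]
      by (cases "y = x") auto
    then show ?thesis by blast
  qed
  have pc1: "pc ?bu bv"
    unfolding pc_def
  proof (intro allI impI)
    fix j y assume j: "j < length ?bu" and ne: "count_list (?bu!j) y \<noteq> count_list (bv!j) y"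
    have jy: "(j, y) \<noteq> (i, x)" using ne cBx i by auto
    then have "count_list (bu!j) y \<noteq> count_list (bv!j) y" using ne cnt by simp
    then have "NF bu j y \<and> NF bv j y" using P j by (simp add: pc_def)
    then show "NF ?bu j y \<and> NF bv j y" using NF_mono[OF i B(1)] by blast
  qed
  have U: "Uset ?bu bv = Uset bu bv - {(i, x)}"
  proof -
    have "(j, y) \<in> Uset ?bu bv \<longleftrightarrow> (j, y) \<in> Uset bu bv - {(i, x)}" for j y
    proof (cases "(j, y) = (i, x)")
      case True then show ?thesis using cBx i by (simp add: Uset_def)
    next
      case False then show ?thesis using cnt[OF False] sc by (simp add: Uset_def)
    qed
    then show ?thesis by auto
  qed
  show ?thesis using g1 B(2) pc1 sc U by (intro exI[of _ ?bu]) simp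
qed

lemma phaseC_aux:
  assumes "card (Uset bu bv) = n" "good ts bu" "good ts bv" "pc bu bv" "set (concat bu) = set (concat bv)"
    "O_ids \<subseteq> S"
  shows "\<exists>bu' bv'. good ts bu' \<and> good ts bv' \<and> (jn ts bu, jn ts bu') \<in> eq_theory S \<and>
     (jn ts bv, jn ts bv') \<in> eq_theory S \<and> (\<forall>i<length bu'. mset (bu'!i) = mset (bv'!i))"
  using assms
proof (induction n arbitrary: bu bv rule: less_induct)
  case (less n)
  have lb: "length bu = Suc (length ts)" "length bv = Suc (length ts)" using less.prems by (auto simp: good_def)
  show ?case
  proof (cases "Uset bu bv = {}")
    case True
    have "mset (bu!i) = mset (bv!i)" if i: "i < length bu" for i
    proof -
      have "count_list (bu!i) x = count_list (bv!i) x" for x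
      proof (cases "x \<in> set (concat bu)")
        case True then show ?thesis using \<open>Uset bu bv = {}\<close> i unfolding Uset_def by blast
      next
        case False
        then have "x \<notin> set (concat bv)" using less.prems(5) by blast
        then have "x \<notin> set (bu!i)" "x \<notin> set (bv!i)" using False i lb nth_mem[of i bu] nth_mem[of i bv] by auto
        then show ?thesis by (simp add: count_list_0_iff)
      qed
      then show ?thesis by (simp add: multiset_eq_iff count_mset)
    qed
    then show ?thesis using less.prems by (intro exI[of _ bu] exI[of _ bv]) (auto intro: eq_theory.refl)
  next
    case False
    then obtain i x where D: "(i, x) \<in> Uset bu bv" by auto
    then have i: "i < length bu" and ne: "count_list (bu!i) x \<noteq> count_list (bv!i) x" by (auto simp: Uset_def)
    have iv: "i < length bv" using i lb by simp
    have cd: "card (Uset bu bv - {(i, x)}) < n" using D Uset_finite less.prems(1)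
      by (metis card_Diff1_less)
    show ?thesis
    proof (cases "count_list (bu!i) x < count_list (bv!i) x")
      case True
      obtain bu1 where S: "good ts bu1" "(jn ts bu, jn ts bu1) \<in> eq_theory S" "pc bu1 bv"
        "set (concat bu1) = set (concat bu)" "length bu1 = length bu" "Uset bu1 bv = Uset bu bv - {(i, x)}"
        using stepC[OF less.prems(2,4) i True less.prems(6)] by blast
      have "card (Uset bu1 bv) < n" using S(6) cd by simp
      then obtain bu' bv' where R: "good ts bu'" "good ts bv'" "(jn ts bu1, jn ts bu') \<in> eq_theory S"
        "(jn ts bv, jn ts bv') \<in> eq_theory S" "\<forall>i<length bu'. mset (bu'!i) = mset (bv'!i)"
        using less.IH[OF _ HOL.refl S(1) less.prems(3) S(3) _ less.prems(6)] S(4) less.prems(5) by metis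
      show ?thesis using R eq_theory.trans[OF S(2) R(3)] by blast
    next
      case False
      then have lt: "count_list (bv!i) x < count_list (bu!i) x" using ne by simp
      have pcv: "pc bv bu" using pc_sym lb less.prems(4) by simp
      obtain bv1 where S: "good ts bv1" "(jn ts bv, jn ts bv1) \<in> eq_theory S" "pc bv1 bu"
        "set (concat bv1) = set (concat bv)" "length bv1 = length bv" "Uset bv1 bu = Uset bv bu - {(i, x)}"
        using stepC[OF less.prems(3) pcv iv lt less.prems(6)] by blast
      have "Uset bu bv1 = Uset bu bv - {(i, x)}"
        using S(4,5,6) Uset_sym[of bv1 bu] Uset_sym[of bv bu] lb less.prems(5) by simp
      then have "card (Uset bu bv1) < n" using cd by simp
      moreover have "pc bu bv1" using pc_sym S(3,5) lb by simp
      ultimately obtain bu' bv' where R: "good ts bu'" "good ts bv'" "(jn ts bu, jn ts bu') \<in> eq_theory S"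
        "(jn ts bv1, jn ts bv') \<in> eq_theory S" "\<forall>i<length bu'. mset (bu'!i) = mset (bv'!i)"
        using less.IH[OF _ HOL.refl less.prems(2) S(1) _ _ less.prems(6)] S(4) less.prems(5) by metis
      show ?thesis using R eq_theory.trans[OF S(2) R(4)] by blast
    qed
  qed
qed

lemma phaseC:
  assumes "good ts bu" "good ts bv" "pc bu bv" "set (concat bu) = set (concat bv)" "O_ids \<subseteq> S"
  shows "\<exists>bu' bv'. good ts bu' \<and> good ts bv' \<and> (jn ts bu, jn ts bu') \<in> eq_theory S \<and>
     (jn ts bv, jn ts bv') \<in> eq_theory S \<and> (\<forall>i<length bu'. mset (bu'!i) = mset (bv'!i))"
  using phaseC_aux[OF HOL.refl assms] .

lemma pc_init_one:
  assumes gu: "good ts bu" and gv: "good ts bv" and I: "invar ts bu bv" and i: "i < length bu"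
    and pres: "(x \<in> set (bu!i)) = (x \<in> set (bv!i))"
    and ne: "count_list (bu!i) x \<noteq> count_list (bv!i) x"
  shows "NF bu i x"
proof -
  have lb: "length bu = Suc (length ts)" "length bv = Suc (length ts)" using gu gv by (auto simp: good_def)
  have iv: "i < length bv" using i lb by simp
  have k1: "i \<le> Suc (length ts)" "Suc i \<le> Suc (length ts)" using i lb by auto
  have xu: "x \<in> set (bu!i)"
  proof (rule ccontr)
    assume "x \<notin> set (bu!i)"
    then have "count_list (bu!i) x = 0" "count_list (bv!i) x = 0" using pres by (simp_all add: count_list_0_iff)
    then show False using ne by simp
  qed
  have cu: "1 \<le> count_list (bu!i) x" using xu by (rule cnt_ge1)
  show ?thesis
  proof (rule ccontr)
    assume "\<not> NF bu i x"
    then have c0: "cp bu i x = 0" "count_list (bu!i) x = 1" using xu cu by (auto simp: NF_def)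
    have m1: "min 2 (cp bu i x) = min 2 (cp bv i x)" using I k1 by (simp add: invar_def)
    have m2: "min 2 (cp bu (Suc i) x) = min 2 (cp bv (Suc i) x)" using I k1 by (simp add: invar_def)
    have su: "cp bu (Suc i) x = cp bu i x + count_list (bu!i) x" by (rule cp_Suc[OF i])
    have sv: "cp bv (Suc i) x = cp bv i x + count_list (bv!i) x" by (rule cp_Suc[OF iv])
    have "count_list (bv!i) x = 1" using m1 m2 su sv c0 by (simp add: min_def split: if_splits)
    then show False using ne c0 by simp
  qed
qed

lemma pc_init:
  assumes gu: "good ts bu" and gv: "good ts bv" and I: "invar ts bu bv"
    and pres: "\<forall>i<length bu. \<forall>x. (x \<in> set (bu!i)) = (x \<in> set (bv!i))"
  shows "pc bu bv"
  unfolding pc_def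
proof (intro allI impI)
  fix i x assume i: "i < length bu" and ne: "count_list (bu!i) x \<noteq> count_list (bv!i) x"
  have lb: "length bu = length bv" using gu gv by (auto simp: good_def)
  have p: "(x \<in> set (bu!i)) = (x \<in> set (bv!i))" using pres i by blast
  show "NF bu i x \<and> NF bv i x"
    using pc_init_one[OF gu gv I i p ne] pc_init_one[OF gv gu inv_sym[OF I] _ p[symmetric] ne[symmetric]] i lb
    by simp
qed


lemma after_in2: "after w a b \<Longrightarrow> b \<in> set w"
  by (auto simp: after_def)

lemma after_filter: "P c \<Longrightarrow> P d \<Longrightarrow> after (filter P w) c d = after w c d"
  by (induction w) (auto simp: after_Cons)

lemma list_eq_order:
  "distinct xs \<Longrightarrow> distinct ys \<Longrightarrow> set xs = set ys \<Longrightarrow>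
   (\<forall>c d. c \<in> set xs \<longrightarrow> d \<in> set xs \<longrightarrow> after xs c d = after ys c d) \<Longrightarrow> xs = ys"
proof (induction xs arbitrary: ys)
  case Nil then show ?case by simp
next
  case (Cons a xs)
  then obtain b ys' where ys: "ys = b # ys'" by (cases ys) auto
  have ab: "a = b"
  proof (rule ccontr)
    assume ne: "a \<noteq> b"
    have "b \<in> set (a # xs)" using Cons.prems(3) ys by simp
    moreover have "a \<in> set ys'" using Cons.prems(3) ys ne by (metis list.set_intros(1) set_ConsD)
    then have "after ys b a" using ys by (simp add: after_Cons)
    ultimately have "after (a # xs) b a" using Cons.prems(4) by (metis list.set_intros(1))
    then have "after xs b a" using ne by (simp add: after_Cons)
    then have "a \<in> set xs" by (rule after_in2)
    then show False using Cons.prems(1) by simp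
  qed
  have d1: "distinct xs" "distinct ys'" using Cons.prems(1,2) ys by auto
  have s1: "set xs = set ys'" using Cons.prems(1,2,3) ys ab by auto
  have o1: "\<forall>c d. c \<in> set xs \<longrightarrow> d \<in> set xs \<longrightarrow> after xs c d = after ys' c d"
  proof (intro allI impI)
    fix c d assume c: "c \<in> set xs" and d: "d \<in> set xs"
    have "c \<noteq> a" using c Cons.prems(1) by auto
    have h: "after (a # xs) c d = after ys c d" using Cons.prems(4) c d by auto
    then show "after xs c d = after ys' c d"
      using \<open>c \<noteq> a\<close> ys ab by (simp add: after_Cons)
  qed
  show ?case using Cons.IH[OF d1 s1 o1] ys ab by simp
qed

lemma count_filter: "count_list (filter P w) x = (if P x then count_list w x else 0)"
  by (induction w) auto

lemma distinct_from_count: "(\<forall>x. count_list xs x \<le> 1) \<Longrightarrow> distinct xs"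
proof (induction xs)
  case Nil then show ?case by simp
next
  case (Cons a xs)
  have "count_list xs a = 0" using Cons.prems[rule_format, of a] by simp
  then have "a \<notin> set xs" by (simp add: count_list_0_iff)
  moreover have "\<forall>x. count_list xs x \<le> 1" using Cons.prems by (metis count_list.simps(2) le_add1 order_trans add.commute)
  ultimately show ?case using Cons.IH by simp
qed

lemma distinct_simple: "distinct (filter (\<lambda>z. count_list w z = 1) w)"
  by (rule distinct_from_count) (simp add: count_filter)

lemma split_at_div:
  assumes g: "good ts bs" and k0: "0 < k" and k: "k \<le> length ts"
  shows "\<exists>X R. jn ts bs = X @ ts!(k-1) # R \<and> ts!(k-1) \<notin> set X \<and> ts!(k-1) \<notin> set R \<and>
    (\<forall>x. x \<notin> set ts \<longrightarrow> count_list X x = cp bs k x \<and> count_list R x = count_list (concat bs) x - cp bs k x)"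
proof -
  have L: "length bs = Suc (length ts)" and kb: "k < length bs" and dts: "distinct ts"
    using g k by (auto simp: good_def)
  obtain pre post where P: "\<forall>B. jn ts (bs[k:=B]) = pre @ B @ post"
    "0 < k \<longrightarrow> (\<exists>X. pre = X @ [ts!(k-1)] \<and> mset X = mset (concat (take k bs)) + mset (take (k-1) ts))"
    using jn_split[OF L kb] by blast
  obtain X where X: "pre = X @ [ts!(k-1)]" "mset X = mset (concat (take k bs)) + mset (take (k-1) ts)"
    using P(2) k0 by blast
  let ?t = "ts!(k-1)"
  let ?R = "bs!k @ post"
  have w: "jn ts bs = X @ ?t # ?R" using P(1)[rule_format, of "bs!k"] X(1) by simp
  have tts: "?t \<in> set ts" using k k0 by simp
  have nb: "y \<notin> set ts" if "y \<in> set (concat bs)" for y using good_blocks_notin[OF g that] .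
  have tX: "?t \<notin> set X"
  proof
    assume "?t \<in> set X"
    then have "?t \<in> set (concat (take k bs)) \<or> ?t \<in> set (take (k-1) ts)"
      using mset_set_count(1)[OF X(2)] by auto
    then show False
    proof
      assume "?t \<in> set (concat (take k bs))"
      then have "?t \<in> set (concat bs)" by (auto dest: in_set_takeD)
      then show False using nb tts by blast
    next
      assume "?t \<in> set (take (k-1) ts)"
      moreover have "k - 1 < length ts" using k k0 by arith
      ultimately show False using distinct_nth_notin_take[OF dts, of "k-1" "k-1"] by simp
    qed
  qed
  have ct: "count_list (jn ts bs) ?t = 1"
  proof -
    have "?t \<notin> set (concat bs)" using nb tts by blast
    then show ?thesis using count_jn[OF L, of ?t] distinct_count1[OF dts tts] by (simp add: count_list_0_iff)
  qed
  have tR: "?t \<notin> set ?R"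
  proof
    assume "?t \<in> set ?R"
    then have "count_list ?R ?t \<noteq> 0" by (simp add: count_list_0_iff)
    moreover have "count_list (jn ts bs) ?t = count_list X ?t + 1 + count_list ?R ?t"
      unfolding w by simp
    ultimately show False using ct by simp
  qed
  have cnt: "count_list X x = cp bs k x \<and> count_list ?R x = count_list (concat bs) x - cp bs k x"
    if x: "x \<notin> set ts" for x
  proof -
    have "count_list (take (k-1) ts) x = 0" using x by (auto simp: count_list_0_iff dest: in_set_takeD)
    then have cX: "count_list X x = cp bs k x" using mset_set_count(2)[OF X(2), of x] by (simp add: cp_def)
    have "count_list (jn ts bs) x = count_list (concat bs) x" using count_jn[OF L, of x] x
      by (simp add: count_list_0_iff)
    moreover have "count_list (jn ts bs) x = count_list X x + count_list ?R x" unfolding w using x tts by auto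
    ultimately show ?thesis using cX by simp
  qed
  show ?thesis using w tX tR cnt by blast
qed

lemma after_div: "t \<notin> set X \<Longrightarrow> t \<notin> set R \<Longrightarrow> after (X @ t # R) t x = (x \<in> set R)"
  by (auto simp: after_append after_Cons dest: after_in)


lemma sub_eq:
  assumes "A \<subseteq> eq_theory B" shows "eq_theory A \<subseteq> eq_theory B"
proof
  fix p assume "p \<in> eq_theory A"
  then have "(fst p, snd p) \<in> eq_theory A" by simp
  then have "(fst p, snd p) \<in> eq_theory B" using eq_theory_closed assms by blast
  then show "p \<in> eq_theory B" by simp
qed

lemma trans4: "(u, u') \<in> eq_theory S \<Longrightarrow> (v, v') \<in> eq_theory S \<Longrightarrow> (u', v') \<in> eq_theory S \<Longrightarrow> (u, v) \<in> eq_theory S"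
  by (meson eq_theory.sym eq_theory.trans)

lemma ax_in: "p \<in> S \<Longrightarrow> p \<in> eq_theory S" by (cases p) (simp add: eq_theory.ax)

lemma good_from_split:
  assumes w: "w = jn ts bs" and L: "length bs = Suc (length ts)" and d: "distinct ts"
    and T: "\<forall>t\<in>set ts. count_list w t = 1" and B: "\<forall>B\<in>set bs. \<forall>z\<in>set B. count_list w z \<noteq> 1"
  shows "good ts bs"
proof -
  have "z \<notin> set ts \<and> 2 \<le> count_list (concat bs) z" if "C \<in> set bs" "z \<in> set C" for C z
  proof -
    have z1: "count_list w z \<noteq> 1" using B that by blast
    then have zt: "z \<notin> set ts" using T by blast
    have "count_list w z = count_list (concat bs) z" using count_jn[OF L, of z] w zt
      by (simp add: count_list_0_iff)
    moreover have "z \<in> set (concat bs)" using that by auto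
    then have "1 \<le> count_list (concat bs) z" by (rule cnt_ge1)
    ultimately show ?thesis using z1 zt by simp
  qed
  then show ?thesis using L d by (auto simp: good_def)
qed

lemma Dset_empty_pres:
  assumes "good ts bu" "good ts bv" "invar ts bu bv" "Dset bu bv = {}"
  shows "\<forall>i<length bu. \<forall>x. (x \<in> set (bu!i)) = (x \<in> set (bv!i))"
proof (intro allI impI)
  fix i x assume i: "i < length bu"
  have lb: "length bu = Suc (length ts)" "length bv = Suc (length ts)" using assms by (auto simp: good_def)
  have ce: "set (concat bu) = set (concat bv)" using content_eq[OF assms(3)] .
  show "(x \<in> set (bu!i)) = (x \<in> set (bv!i))"
  proof (cases "x \<in> set (concat bu)")
    case True then show ?thesis using assms(4) i unfolding Dset_def by blast
  next
    case False
    then have "x \<notin> set (concat bv)" using ce by blast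
    then show ?thesis using False i lb nth_mem[of i bu] nth_mem[of i bv] by auto
  qed
qed

lemma final_from_blocks:
  assumes gu: "good ts bu" and gv: "good ts bv" and I: "invar ts bu bv"
    and pres: "\<forall>i<length bu. \<forall>x. (x \<in> set (bu!i)) = (x \<in> set (bv!i))" and O: "O_ids \<subseteq> S"
  shows "\<exists>bu' bv'. (jn ts bu, jn ts bu') \<in> eq_theory S \<and> (jn ts bv, jn ts bv') \<in> eq_theory S \<and>
     well_balanced (jn ts bu') (jn ts bv')"
proof -
  have "pc bu bv" by (rule pc_init[OF gu gv I pres])
  then obtain bu' bv' where R: "good ts bu'" "good ts bv'" "(jn ts bu, jn ts bu') \<in> eq_theory S"
     "(jn ts bv, jn ts bv') \<in> eq_theory S" "\<forall>i<length bu'. mset (bu'!i) = mset (bv'!i)"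
    using phaseC[OF gu gv _ content_eq[OF I] O] by blast
  show ?thesis using R wb_good[OF R(1,2,5)] by blast
qed


theorem lemma3p5:
  fixes u v :: word
  assumes "holds_in_FE (u, v)"
  shows "\<exists>u' v'. well_balanced u' v' \<and>
           (O_sub {(u, v)} = O_sub {(u', v')} \<or>
            O_sub {(u, v)} = O_sub {(u', v'), extra_id})"
proof -
  have E: "phiE u = phiE v" and F: "phiF u = phiF v" using FE_invariants[OF assms] by auto
  have I1: "\<And>z. min 2 (count_list u z) = min 2 (count_list v z)"
    using E unfolding phiE_def by (simp add: fun_eq_iff)
  have I2: "\<And>c d. (count_list u c = 1 \<and> after u c d) = (count_list v c = 1 \<and> after v c d)"
    using E unfolding phiE_def by (simp add: fun_eq_iff)
  have I3: "\<And>t x. (if count_list u t = 1 then min 2 (count_list (takeWhile (\<lambda>c. c \<noteq> t) u) x) else 0)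
     = (if count_list v t = 1 then min 2 (count_list (takeWhile (\<lambda>c. c \<noteq> t) v) x) else 0)"
    using F unfolding phiF_def by (simp add: fun_eq_iff)
  define P where "P = (\<lambda>z. count_list u z = 1)"
  have Pv: "(\<lambda>z. count_list v z = 1) = P"
  proof
    fix z show "(count_list v z = 1) = P z" using I1[of z] unfolding P_def by linarith
  qed
  define ts where "ts = filter P u"
  have su: "simple_letters u = ts" by (simp add: simple_letters_def P_def ts_def)
  have dts: "distinct ts" unfolding ts_def P_def by (rule distinct_simple)
  have fv: "filter P v = ts"
  proof -
    have d1: "distinct (filter P v)" using distinct_simple[of v] Pv by simp
    have inset: "z \<in> set w" if "count_list w z = 1" for w z
      using that count_list_0_iff[of w z] by auto
    have s1: "set (filter P v) = set ts"
      using inset[of u] inset[of v] Pv unfolding ts_def P_def by (auto simp: fun_eq_iff)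
    have o1: "\<forall>c d. c \<in> set (filter P v) \<longrightarrow> d \<in> set (filter P v) \<longrightarrow> after (filter P v) c d = after ts c d"
    proof (intro allI impI)
      fix c d assume c: "c \<in> set (filter P v)" and d: "d \<in> set (filter P v)"
      have Pc: "P c" "P d" using c d by auto
      have "after ts c d = after u c d" unfolding ts_def by (rule after_filter[OF Pc])
      also have "\<dots> = after v c d" using I2[of c d] Pc Pv unfolding P_def by (auto simp: fun_eq_iff)
      also have "\<dots> = after (filter P v) c d" by (rule after_filter[OF Pc, symmetric])
      finally show "after (filter P v) c d = after ts c d" by simp
    qed
    show ?thesis by (rule list_eq_order[OF d1 dts s1 o1])
  qed
  define bu where "bu = split_at_pred P u"
  define bv where "bv = split_at_pred P v"
  have spu: "u = jn ts bu" "length bu = Suc (length ts)" "\<forall>B\<in>set bu. \<forall>z\<in>set B. \<not> P z"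
    using split_join[of u P] unfolding ts_def bu_def by auto
  have spv: "v = jn ts bv" "length bv = Suc (length ts)" "\<forall>B\<in>set bv. \<forall>z\<in>set B. \<not> P z"
    using split_join[of v P] fv unfolding bv_def by auto
  have tsP: "\<forall>t\<in>set ts. P t" unfolding ts_def by simp
  have gu: "good ts bu"
    by (rule good_from_split[OF spu(1,2) dts]) (use tsP spu(3) in \<open>auto simp: P_def\<close>)
  have gv: "good ts bv"
  proof (rule good_from_split[OF spv(1,2) dts])
    show "\<forall>t\<in>set ts. count_list v t = 1" using tsP Pv by (auto simp: fun_eq_iff)
    show "\<forall>B\<in>set bv. \<forall>z\<in>set B. count_list v z \<noteq> 1" using spv(3) Pv by (auto simp: fun_eq_iff)
  qed
  have Tu: "count_list (concat bu) x = count_list u x" if "x \<notin> set ts" for x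
    using count_jn[OF spu(2), of x] spu(1) that by (simp add: count_list_0_iff)
  have Tv: "count_list (concat bv) x = count_list v x" if "x \<notin> set ts" for x
    using count_jn[OF spv(2), of x] spv(1) that by (simp add: count_list_0_iff)
  have I: "invar ts bu bv"
    unfolding invar_def
  proof (intro allI impI)
    fix x k assume k: "k \<le> Suc (length ts)"
    show "((cp bu k x < count_list (concat bu) x) = (cp bv k x < count_list (concat bv) x)) \<and>
          min 2 (cp bu k x) = min 2 (cp bv k x)"
    proof (cases "x \<in> set ts")
      case True
      have "x \<notin> set (concat bu)" "x \<notin> set (concat bv)"
        using good_blocks_notin[OF gu] good_blocks_notin[OF gv] True by auto
      then have "count_list (concat bu) x = 0" "count_list (concat bv) x = 0"
        by (simp_all add: count_list_0_iff)
      then have "cp bu k x = 0" "cp bv k x = 0" using cp_le_T[of bu k x] cp_le_T[of bv k x] by simp_all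
      then show ?thesis using \<open>count_list (concat bu) x = 0\<close> \<open>count_list (concat bv) x = 0\<close> by simp
    next
      case False
      note xt = False
      show ?thesis
      proof (cases "k = 0")
        case True
        have "(0 < count_list u x) = (0 < count_list v x)" using I1[of x] by linarith
        then show ?thesis using True Tu[OF xt] Tv[OF xt] by simp
      next
        case False
        show ?thesis
        proof (cases "k = Suc (length ts)")
          case True
          have "cp bu k x = count_list (concat bu) x" "cp bv k x = count_list (concat bv) x"
            using True spu(2) spv(2) by (simp_all add: cp_def)
          then show ?thesis using I1[of x] Tu[OF xt] Tv[OF xt] by simp
        next
          case False
          then have k0: "0 < k" and kt: "k \<le> length ts" using \<open>k \<noteq> 0\<close> k by auto
          let ?t = "ts!(k-1)"
          obtain Xu Ru where U: "jn ts bu = Xu @ ?t # Ru" "?t \<notin> set Xu" "?t \<notin> set Ru"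
            "count_list Xu x = cp bu k x" "count_list Ru x = count_list (concat bu) x - cp bu k x"
            using split_at_div[OF gu k0 kt] xt by blast
          obtain Xv Rv where V: "jn ts bv = Xv @ ?t # Rv" "?t \<notin> set Xv" "?t \<notin> set Rv"
            "count_list Xv x = cp bv k x" "count_list Rv x = count_list (concat bv) x - cp bv k x"
            using split_at_div[OF gv k0 kt] xt by blast
          have tts: "?t \<in> set ts" using k0 kt by simp
          have cu: "count_list u ?t = 1" using tsP tts unfolding P_def by auto
          have cv: "count_list v ?t = 1" using tsP tts Pv by (auto simp: fun_eq_iff)
          have twu: "takeWhile (\<lambda>c. c \<noteq> ?t) u = Xu" using U(1,2) spu(1) by (simp add: tw_app_notin)
          have twv: "takeWhile (\<lambda>c. c \<noteq> ?t) v = Xv" using V(1,2) spv(1) by (simp add: tw_app_notin)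
          have m: "min 2 (cp bu k x) = min 2 (cp bv k x)"
            using I3[of ?t x] cu cv twu twv U(4) V(4) by simp
          have au: "after u ?t x = (x \<in> set Ru)" using after_div[OF U(2,3)] U(1) spu(1) by simp
          have av: "after v ?t x = (x \<in> set Rv)" using after_div[OF V(2,3)] V(1) spv(1) by simp
          have "after u ?t x = after v ?t x" using I2[of ?t x] cu cv by simp
          then have "(x \<in> set Ru) = (x \<in> set Rv)" using au av by simp
          moreover have "(x \<in> set Ru) = (cp bu k x < count_list (concat bu) x)"
            using U(5) count_list_0_iff[of Ru x] by auto
          moreover have "(x \<in> set Rv) = (cp bv k x < count_list (concat bv) x)"
            using V(5) count_list_0_iff[of Rv x] by auto
          ultimately show ?thesis using m by simp
        qed
      qed
    qed
  qed
  have uj: "jn ts bu = u" and vj: "jn ts bv = v" using spu(1) spv(1) by simp_all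
  show ?thesis
  proof (cases "Dset bu bv = {}")
    case True
    have pres: "\<forall>i<length bu. \<forall>x. (x \<in> set (bu!i)) = (x \<in> set (bv!i))"
      by (rule Dset_empty_pres[OF gu gv I True])
    obtain bu' bv' where R: "(u, jn ts bu') \<in> eq_theory O_ids" "(v, jn ts bv') \<in> eq_theory O_ids"
      "well_balanced (jn ts bu') (jn ts bv')"
      using final_from_blocks[OF gu gv I pres, of O_ids] uj vj by auto
    let ?u = "jn ts bu'" and ?v = "jn ts bv'"
    have "O_sub {(u, v)} = O_sub {(?u, ?v)}"
    proof
      show "O_sub {(u, v)} \<subseteq> O_sub {(?u, ?v)}" unfolding O_sub_def
      proof (rule sub_eq)
        have m: "eq_theory O_ids \<subseteq> eq_theory (O_ids \<union> {(?u, ?v)})" by (rule sub_eq) (auto intro: ax_in)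
        have "(u, v) \<in> eq_theory (O_ids \<union> {(?u, ?v)})"
          by (rule trans4[of u ?u _ v ?v]) (use m R in \<open>auto intro: ax_in\<close>)
        then show "O_ids \<union> {(u, v)} \<subseteq> eq_theory (O_ids \<union> {(?u, ?v)})" by (auto intro: ax_in)
      qed
      show "O_sub {(?u, ?v)} \<subseteq> O_sub {(u, v)}" unfolding O_sub_def
      proof (rule sub_eq)
        have m: "eq_theory O_ids \<subseteq> eq_theory (O_ids \<union> {(u, v)})" by (rule sub_eq) (auto intro: ax_in)
        have "(?u, ?v) \<in> eq_theory (O_ids \<union> {(u, v)})"
          by (rule trans4[of ?u u _ ?v v]) (use m R in \<open>auto intro: ax_in eq_theory.sym\<close>)
        then show "O_ids \<union> {(?u, ?v)} \<subseteq> eq_theory (O_ids \<union> {(u, v)})" by (auto intro: ax_in)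
      qed
    qed
    then show ?thesis using R(3) by blast
  next
    case False
    let ?S1 = "O_ids \<union> {(u, v)}"
    have OS1: "O_ids \<subseteq> ?S1" by blast
    have D: "([0,0,2,0,3,0], [0,0,2,3,0]) \<in> eq_theory ?S1"
    proof -
      obtain i x where Dx: "(i, x) \<in> Dset bu bv" using False by auto
      then have i: "i < length bu" and d: "(x \<in> set (bu!i)) \<noteq> (x \<in> set (bv!i))" by (auto simp: Dset_def)
      have iv: "i < length bv" using i spu(2) spv(2) by simp
      show ?thesis
      proof (cases "x \<in> set (bu!i)")
        case True
        then have xv: "x \<notin> set (bv!i)" using d by simp
        have A: "2 \<le> cp bu i x" "2 \<le> cp bv i x" "x \<in> set (concat (drop (Suc i) bu))" "x \<in> set (concat (drop (Suc i) bv))"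
          using claimA[OF gu gv I i True xv] by auto
        show ?thesis using discrepancy_D[OF gu gv i True xv A] uj vj by simp
      next
        case False
        then have xv: "x \<in> set (bv!i)" using d by simp
        have A: "2 \<le> cp bv i x" "2 \<le> cp bu i x" "x \<in> set (concat (drop (Suc i) bv))" "x \<in> set (concat (drop (Suc i) bu))"
          using claimA[OF gv gu inv_sym[OF I] iv xv False] by auto
        have D': "([0,0,2,0,3,0], [0,0,2,3,0]) \<in> eq_theory (O_ids \<union> {(v, u)})"
          using discrepancy_D[OF gv gu iv xv False A] uj vj by simp
        have "O_ids \<union> {(v, u)} \<subseteq> eq_theory ?S1"
          using ax_in[of _ ?S1] eq_theory.sym[OF ax_in[of "(u, v)" ?S1]] by auto
        then show ?thesis using D' sub_eq by blast
      qed
    qed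
    have ex: "extra_id \<in> eq_theory ?S1" by (rule extra_from_D[OF OS1 D])
    let ?X = "O_ids \<union> {extra_id}"
    obtain bu1 bv1 where B: "good ts bu1" "good ts bv1" "(jn ts bu, jn ts bu1) \<in> eq_theory ?X"
      "(jn ts bv, jn ts bv1) \<in> eq_theory ?X" "invar ts bu1 bv1"
      "\<forall>i<length bu1. \<forall>x. (x \<in> set (bu1!i)) = (x \<in> set (bv1!i))"
      using phaseB[OF gu gv I, of ?X] by blast
    obtain bu' bv' where R: "(jn ts bu1, jn ts bu') \<in> eq_theory ?X" "(jn ts bv1, jn ts bv') \<in> eq_theory ?X"
      "well_balanced (jn ts bu') (jn ts bv')"
      using final_from_blocks[OF B(1,2,5,6), of ?X] by blast
    let ?u = "jn ts bu'" and ?v = "jn ts bv'"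
    have eu: "(u, ?u) \<in> eq_theory ?X" using eq_theory.trans[OF B(3) R(1)] uj by simp
    have ev: "(v, ?v) \<in> eq_theory ?X" using eq_theory.trans[OF B(4) R(2)] vj by simp
    let ?S2 = "O_ids \<union> {(?u, ?v), extra_id}"
    have "O_sub {(u, v)} = O_sub {(?u, ?v), extra_id}"
    proof
      show "O_sub {(u, v)} \<subseteq> O_sub {(?u, ?v), extra_id}" unfolding O_sub_def
      proof (rule sub_eq)
        have m: "eq_theory ?X \<subseteq> eq_theory ?S2" by (rule sub_eq) (auto intro: ax_in)
        have "(u, v) \<in> eq_theory ?S2"
          by (rule trans4[of u ?u _ v ?v]) (use m eu ev in \<open>auto intro: ax_in\<close>)
        then show "?S1 \<subseteq> eq_theory ?S2" by (auto intro: ax_in)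
      qed
      show "O_sub {(?u, ?v), extra_id} \<subseteq> O_sub {(u, v)}" unfolding O_sub_def
      proof (rule sub_eq)
        have m: "eq_theory ?X \<subseteq> eq_theory ?S1" by (rule sub_eq) (use ex in \<open>auto intro: ax_in\<close>)
        have "(?u, ?v) \<in> eq_theory ?S1"
          by (rule trans4[of ?u u _ ?v v]) (use m eu ev in \<open>auto intro: ax_in eq_theory.sym\<close>)
        then show "?S2 \<subseteq> eq_theory ?S1" using ex by (auto intro: ax_in)
      qed
    qed
    then show ?thesis using R(3) by blast
  qed
qed


end
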